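(* Let $\nu\in\mathscr{P}_{\mathbb{T}^2}$ with marginals $\nu^{(1)},\nu^{(2)}$. (1) $\nu$ has the $\boxtimes\boxtimes$-factor $\mathrm{m}\times\delta_1$ if and only if $\nu=\mathrm{m}\times\nu^{(2)}$. (2) $\nu$ has the $\boxtimes\boxtimes$-factor $\delta_1\times\mathrm{m}$ if and only if $\nu=\nu^{(1)}\times\mathrm{m}$. (3) $\nu$ has the $\boxtimes\boxtimes$-factor $\mathrm{m}\times\mathrm{m}$ if and only if $\nu=\mathrm{m}\times\mathrm{m}$. (4) $P$ is a $\boxtimes\boxtimes$-factor of $\nu$ if and only if $m_{p,q}(\nu)=\delta_{p,q}\,m_{1,1}(\nu)^p$ for all $(p,q)\in\mathbb{Z}\times(\mathbb{N}\cup\{0\})$, where $\delta_{p,q}$ is the Kronecker delta. Statements (1)–(3) remain true if $\boxtimes\boxtimes$ is replaced by $\boxtimes\boxtimes^{\mathrm{op}}$. Moreover, $P^\star$ is a $\boxtimes\boxtimes^{\mathrm{op}}$-factor of $\nu$ if and only if $m_{p,q}(\nu)=\delta_{p,-q}\,m_{1,-1}(\nu)^p$ for all $(p,q)\in\mathbb{Z}\times(-\mathbb{N}\cup\{0\})$.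
   Context: $\mathscr{P}_{\mathbb{T}^2}$: Borel probability measures on $\mathbb{T}^2$; $m_{p,q}(\nu)=\int s_1^ps_2^q\,d\nu$; convention $0^0=1$. The distribution of commuting unitaries $(u,v)$ in a $C^*$-probability space $(\mathcal{A},\varphi)$ is the $\nu$ with $m_{p,q}(\nu)=\varphi(u^pv^q)$. $\nu_1\boxtimes\boxtimes\nu_2$ is the distribution of $(u_1u_2,v_1v_2)$, where $(u_1,v_1),(u_2,v_2)$ are bi-free (Voiculescu) bipartite pairs of unitaries (each $u_i$ commutes with each $v_j$) with distributions $\nu_1,\nu_2$. $\nu^\star$ is the push-forward under $(s_1,s_2)\mapsto(s_1,1/s_2)$ and $\nu_1\boxtimes\boxtimes^{\mathrm{op}}\nu_2=(\nu_1^\star\boxtimes\boxtimes\nu_2^\star)^\star$. A measure $\mu$ is a $\boxtimes\boxtimes$-factor of $\nu$ if $\nu=\mu\boxtimes\boxtimes\mu''$ for some $\mu''\in\mathscr{P}_{\mathbb{T}^2}$ (similarly for $\boxtimes\boxtimes^{\mathrm{op}}$). $\mathrm{m}$ is normalized Haar measure on $\mathbb{T}$ and $P(B)=\mathrm{m}(\{s:(s,\bar s)\in B\})$. *)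

theory Defs
  imports "HOL-Probability.Probability"
begin

type_synonym m2 = "(complex \<times> complex) measure"

definition torus2 :: "(complex \<times> complex) set" where
  "torus2 = {z. cmod (fst z) = 1 \<and> cmod (snd z) = 1}"

definition PT2 :: "m2 \<Rightarrow> bool" where
  "PT2 \<nu> \<longleftrightarrow> prob_space \<nu> \<and> sets \<nu> = sets (borel :: m2) \<and> emeasure \<nu> (UNIV - torus2) = 0"

definition tmom :: "m2 \<Rightarrow> int \<Rightarrow> int \<Rightarrow> complex" where
  "tmom \<nu> p q = (\<integral>z. (fst z) powi p * (snd z) powi q \<partial>\<nu>)"

definition haarT :: "complex measure" where
  "haarT = distr (restrict_space lborel {0..1::real}) borel (\<lambda>t. cis (2 * pi * t))"

definition delta1 :: "complex measure" where
  "delta1 = return borel 1"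

definition marg1 :: "m2 \<Rightarrow> complex measure" where
  "marg1 \<nu> = distr \<nu> borel fst"

definition marg2 :: "m2 \<Rightarrow> complex measure" where
  "marg2 \<nu> = distr \<nu> borel snd"

definition Pmeas :: m2 where
  "Pmeas = distr haarT borel (\<lambda>s. (s, cnj s))"

definition tstar :: "m2 \<Rightarrow> m2" where
  "tstar \<nu> = distr \<nu> borel (\<lambda>z. (fst z, inverse (snd z)))"

text \<open>Vectors of L^2(nu) are represented by Laurent polynomials in (s1,s2), given as
  formal finite sums (list of (exponent, coefficient)).  The state vector xi is the
  constant 1.  Pairing with xi is integration against nu.\<close>

type_synonym lpoly = "((int \<times> int) \<times> complex) list"

definition lexp :: "m2 \<Rightarrow> lpoly \<Rightarrow> complex" where
  "lexp \<nu> f = (\<Sum>t\<leftarrow>f. snd t * tmom \<nu> (fst (fst t)) (snd (fst t)))"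

definition lshift :: "int \<times> int \<Rightarrow> lpoly \<Rightarrow> lpoly" where
  "lshift k f = map (\<lambda>t. ((fst (fst t) + fst k, snd (fst t) + snd k), snd t)) f"

text \<open>Centering: projection onto the orthogonal complement of xi.\<close>
definition lcenter :: "m2 \<Rightarrow> lpoly \<Rightarrow> lpoly" where
  "lcenter \<nu> f = f @ [((0, 0), - lexp \<nu> f)]"

text \<open>Simple tensors of the reduced free product (H,xi) = (H_1,xi_1) * (H_2,xi_2):
  alternating words of centred vectors; index True = 1, False = 2.  The empty word is xi.\<close>
type_synonym fword = "(bool \<times> lpoly) list"
type_synonym fvec = "(complex \<times> fword) list"

text \<open>Left regular action lambda_i(T) for T = multiplication by s1^a s2^b on H_i.\<close>
fun lam_word :: "(bool \<Rightarrow> m2) \<Rightarrow> bool \<Rightarrow> int \<times> int \<Rightarrow> fword \<Rightarrow> fvec" where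
  "lam_word N i k [] =
     [(lexp (N i) [(k, 1)], []), (1, [(i, lcenter (N i) [(k, 1)])])]"
| "lam_word N i k ((j, x) # w) =
     (if j = i then
        [(lexp (N i) (lshift k x), w), (1, (i, lcenter (N i) (lshift k x)) # w)]
      else
        [(lexp (N i) [(k, 1)], (j, x) # w), (1, (i, lcenter (N i) [(k, 1)]) # (j, x) # w)])"

text \<open>Right action rho_i(T): the same, acting on the last tensor factor.\<close>
definition rho_word :: "(bool \<Rightarrow> m2) \<Rightarrow> bool \<Rightarrow> int \<times> int \<Rightarrow> fword \<Rightarrow> fvec" where
  "rho_word N i k w = map (\<lambda>t. (fst t, rev (snd t))) (lam_word N i k (rev w))"

definition vapply :: "(fword \<Rightarrow> fvec) \<Rightarrow> fvec \<Rightarrow> fvec" where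
  "vapply op v = concat (map (\<lambda>t. map (\<lambda>s. (fst t * fst s, snd s)) (op (snd t))) v)"

definition vac :: "fvec \<Rightarrow> complex" where
  "vac v = (\<Sum>t\<leftarrow>v. if snd t = [] then fst t else 0)"

text \<open>phi(u^p v^q) for u = lambda_1(u_1) lambda_2(u_2), v = rho_1(v_1) rho_2(v_2), where
  (u_i,v_i) = (mult by s1, mult by s2) on L^2(nu_i); the pairs (lambda_i(u_i), rho_i(v_i))
  are bi-free with distributions nu_i.\<close>
definition fock_moment :: "(bool \<Rightarrow> m2) \<Rightarrow> int \<Rightarrow> int \<Rightarrow> complex" where
  "fock_moment N p q =
    (let vstep = (if q \<ge> 0 then vapply (rho_word N True (0, 1)) \<circ> vapply (rho_word N False (0, 1))
                  else vapply (rho_word N False (0, -1)) \<circ> vapply (rho_word N True (0, -1)));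
         ustep = (if p \<ge> 0 then vapply (lam_word N True (1, 0)) \<circ> vapply (lam_word N False (1, 0))
                  else vapply (lam_word N False (-1, 0)) \<circ> vapply (lam_word N True (-1, 0)))
     in vac ((ustep ^^ nat \<bar>p\<bar>) ((vstep ^^ nat \<bar>q\<bar>) [(1, [])])))"

text \<open>nu = nu1 boxtimes-boxtimes nu2 (measures on T^2 are determined by their moments).\<close>
definition bbconv :: "m2 \<Rightarrow> m2 \<Rightarrow> m2 \<Rightarrow> bool" where
  "bbconv \<nu>1 \<nu>2 \<nu> \<longleftrightarrow> PT2 \<nu> \<and>
     (\<forall>p q. tmom \<nu> p q = fock_moment (\<lambda>i. if i then \<nu>1 else \<nu>2) p q)"

definition bbconv_op :: "m2 \<Rightarrow> m2 \<Rightarrow> m2 \<Rightarrow> bool" where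
  "bbconv_op \<nu>1 \<nu>2 \<nu> \<longleftrightarrow> PT2 \<nu> \<and> (\<exists>\<sigma>. bbconv (tstar \<nu>1) (tstar \<nu>2) \<sigma> \<and> \<nu> = tstar \<sigma>)"

definition bb_factor :: "m2 \<Rightarrow> m2 \<Rightarrow> bool" where
  "bb_factor \<mu> \<nu> \<longleftrightarrow> (\<exists>\<mu>''. PT2 \<mu>'' \<and> bbconv \<mu> \<mu>'' \<nu>)"

definition bbop_factor :: "m2 \<Rightarrow> m2 \<Rightarrow> bool" where
  "bbop_factor \<mu> \<nu> \<longleftrightarrow> (\<exists>\<mu>''. PT2 \<mu>'' \<and> bbconv_op \<mu> \<mu>'' \<nu>)"

end

theory Submission
  imports Defs
begin

definition lsmult :: "complex \<Rightarrow> lpoly \<Rightarrow> lpoly" where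
  "lsmult c f = map (\<lambda>t. (fst t, c * snd t)) f"

lemma lexp_Nil[simp]: "lexp \<nu> [] = 0" by (simp add: lexp_def)
lemma lexp_Cons[simp]: "lexp \<nu> (t # f) = snd t * tmom \<nu> (fst (fst t)) (snd (fst t)) + lexp \<nu> f"
  by (simp add: lexp_def)
lemma lexp_append[simp]: "lexp \<nu> (f @ g) = lexp \<nu> f + lexp \<nu> g"
  by (simp add: lexp_def)
lemma lexp_lsmult[simp]: "lexp \<nu> (lsmult c f) = c * lexp \<nu> f"
  by (induction f) (auto simp: lsmult_def algebra_simps)
lemma lshift_Nil[simp]: "lshift k [] = []" by (simp add: lshift_def)
lemma lshift_Cons[simp]: "lshift k (t # f) = ((fst (fst t) + fst k, snd (fst t) + snd k), snd t) # lshift k f"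
  by (simp add: lshift_def)
lemma lshift_append[simp]: "lshift k (f @ g) = lshift k f @ lshift k g"
  by (simp add: lshift_def)
lemma lshift_lsmult[simp]: "lshift k (lsmult c f) = lsmult c (lshift k f)"
  by (simp add: lshift_def lsmult_def)
lemma lsmult_Nil[simp]: "lsmult c [] = []" by (simp add: lsmult_def)
lemma lsmult_1[simp]: "lsmult 1 f = f" by (simp add: lsmult_def)
lemma lshift_lshift[simp]: "lshift k (lshift k' f) = lshift (fst k' + fst k, snd k' + snd k) f"
  by (induction f) (auto simp: add.assoc)
lemma lshift_0[simp]: "lshift (0,0) f = f"
  by (induction f) auto

lemma lexp_lshift_single[simp]: "lexp \<nu> (lshift k [(e, c)]) = c * tmom \<nu> (fst e + fst k) (snd e + snd k)"
  by simp

definition leq :: "m2 \<Rightarrow> lpoly \<Rightarrow> lpoly \<Rightarrow> bool" where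
  "leq \<nu> x y \<longleftrightarrow> (\<forall>k. lexp \<nu> (lshift k x) = lexp \<nu> (lshift k y))"

lemma lexp_lcenter_shift:
  "lexp \<nu> (lshift k (lcenter \<nu> x)) = lexp \<nu> (lshift k x) - lexp \<nu> x * tmom \<nu> (fst k) (snd k)"
  by (simp add: lcenter_def)

lemma leq_refl[simp]: "leq \<nu> x x" by (simp add: leq_def)
lemma leq_sym: "leq \<nu> x y \<Longrightarrow> leq \<nu> y x" by (simp add: leq_def)
lemma leq_trans: "leq \<nu> x y \<Longrightarrow> leq \<nu> y z \<Longrightarrow> leq \<nu> x z" by (simp add: leq_def)

lemma leq_lcenter_shift:
  assumes "leq \<nu> x y" shows "leq \<nu> (lcenter \<nu> (lshift k x)) (lcenter \<nu> (lshift k y))"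
proof -
  have "lexp \<nu> (lshift k x) = lexp \<nu> (lshift k y)" using assms unfolding leq_def by blast
  moreover have "\<And>k'. lexp \<nu> (lshift k' (lshift k x)) = lexp \<nu> (lshift k' (lshift k y))"
    using assms unfolding leq_def lshift_lshift by blast
  ultimately show ?thesis unfolding leq_def lexp_lcenter_shift by simp
qed

definition weq :: "(bool \<Rightarrow> m2) \<Rightarrow> fword \<Rightarrow> fword \<Rightarrow> bool" where
  "weq N w w' \<longleftrightarrow> list_all2 (\<lambda>a b. fst a = fst b \<and> leq (N (fst a)) (snd a) (snd b)) w w'"

definition good :: "(bool \<Rightarrow> m2) \<Rightarrow> (fword \<Rightarrow> complex) \<Rightarrow> bool" where
  "good N g \<longleftrightarrow> (\<forall>w w'. weq N w w' \<longrightarrow> g w = g w') \<and>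
     (\<forall>u i x y c s. g (u @ (i, x @ lsmult c y) # s) = g (u @ (i, x) # s) + c * g (u @ (i, y) # s))"

definition lin :: "(fword \<Rightarrow> complex) \<Rightarrow> fvec \<Rightarrow> complex" where
  "lin g v = (\<Sum>t\<leftarrow>v. fst t * g (snd t))"

lemma lin_Nil[simp]: "lin g [] = 0" by (simp add: lin_def)
lemma lin_Cons[simp]: "lin g (t # v) = fst t * g (snd t) + lin g v" by (simp add: lin_def)
lemma lin_append[simp]: "lin g (v @ v') = lin g v + lin g v'" by (simp add: lin_def)

lemma lin_vapply: "lin g (vapply op v) = lin (\<lambda>w. lin g (op w)) v"
proof (induction v)
  case Nil then show ?case by (simp add: vapply_def)
next
  case (Cons t v)
  have "\<And>xs. lin g (map (\<lambda>s. (fst t * fst s, snd s)) xs) = fst t * lin g xs"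
    subgoal for xs by (induction xs) (auto simp: algebra_simps)
    done
  then show ?case using Cons by (simp add: vapply_def)
qed

lemma vapply_append[simp]: "vapply op (v @ v') = vapply op v @ vapply op v'"
  by (simp add: vapply_def)
lemma vapply_Nil[simp]: "vapply op [] = []"
  by (simp add: vapply_def)

definition vacw :: "fword \<Rightarrow> complex" where "vacw w = (if w = [] then 1 else 0)"

lemma vac_lin: "vac v = lin vacw v"
  by (induction v) (auto simp: vac_def lin_def vacw_def)

lemma weq_Nil1[simp]: "weq N [] w \<longleftrightarrow> w = []" by (simp add: weq_def)
lemma weq_Cons1: "weq N (a # w) w' \<longleftrightarrow> (\<exists>b r. w' = b # r \<and> fst a = fst b \<and> leq (N (fst a)) (snd a) (snd b) \<and> weq N w r)"
  by (cases w') (auto simp: weq_def)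
lemma weq_refl[simp]: "weq N w w"
  by (induction w) (auto simp: weq_def)
lemma weq_Cons_Cons[simp]: "weq N (a # w) (b # w') \<longleftrightarrow> fst a = fst b \<and> leq (N (fst a)) (snd a) (snd b) \<and> weq N w w'"
  by (simp add: weq_def)

lemma good_resp: "good N g \<Longrightarrow> weq N w w' \<Longrightarrow> g w = g w'" by (simp add: good_def)
lemma good_lin: "good N g \<Longrightarrow> g (u @ (i, x @ lsmult c y) # s) = g (u @ (i, x) # s) + c * g (u @ (i, y) # s)"
  by (simp add: good_def)

lemma good_Nil_letter: assumes "good N g" shows "g (u @ (i, []) # s) = 0"
  using good_lin[OF assms, of u i "[]" 1 "[]" s] by simp

lemma good_smult: assumes "good N g" shows "g (u @ (i, lsmult c x) # s) = c * g (u @ (i, x) # s)"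
  using good_lin[OF assms, of u i "[]" c x s] good_Nil_letter[OF assms] by simp

lemma good_comb: assumes "good N g"
  shows "c1 * g (u @ (i, x) # s) + c2 * g (u @ (i, y) # s) = g (u @ (i, lsmult c1 x @ lsmult c2 y) # s)"
  using good_lin[OF assms, of u i "lsmult c1 x" c2 y s] good_smult[OF assms] by simp

lemma weq_append: "weq N u u' \<Longrightarrow> weq N s s' \<Longrightarrow> weq N (u @ s) (u' @ s')"
  by (simp add: weq_def list_all2_appendI)

lemma good_null: assumes "good N g" "\<forall>k. lexp (N i) (lshift k x) = 0"
  shows "g (u @ (i, x) # s) = 0"
proof -
  have "weq N (u @ (i, x) # s) (u @ (i, []) # s)"
    using assms(2) by (intro weq_append) (auto simp: leq_def)
  then show ?thesis using good_resp[OF assms(1)] good_Nil_letter[OF assms(1)] by metis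
qed

lemma good_letter_resp: assumes "good N g" "leq (N i) x y"
  shows "g (u @ (i, x) # s) = g (u @ (i, y) # s)"
  using assms by (intro good_resp[OF assms(1)] weq_append) auto

lemma leq_lcenter_lin:
  "leq \<nu> (lcenter \<nu> (lshift k (x @ lsmult c y))) (lcenter \<nu> (lshift k x) @ lsmult c (lcenter \<nu> (lshift k y)))"
  unfolding leq_def by (simp add: lcenter_def algebra_simps)

lemma lam_Nil: "lam_word N i k [] = [(lexp (N i) [(k, 1)], []), (1, [(i, lcenter (N i) [(k, 1)])])]"
  by simp

lemma lam_Cons: "lam_word N i k ((j, x) # w) =
     (if j = i then
        [(lexp (N i) (lshift k x), w), (1, (i, lcenter (N i) (lshift k x)) # w)]
      else
        [(lexp (N i) [(k, 1)], (j, x) # w), (1, (i, lcenter (N i) [(k, 1)]) # (j, x) # w)])"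
  by simp

lemma good_lam:
  assumes g: "good N g"
  shows "good N (\<lambda>w. lin g (lam_word N i k w))"
proof -
  have resp: "lin g (lam_word N i k w) = lin g (lam_word N i k w')" if "weq N w w'" for w w'
  proof (cases w)
    case Nil then show ?thesis using that by simp
  next
    case (Cons a r)
    obtain j x where a: "a = (j, x)" by (cases a)
    from that Cons a obtain y r' where w': "w' = (j, y) # r'" and xy: "leq (N j) x y" and rr: "weq N r r'"
      by (auto simp: weq_Cons1)
    show ?thesis
    proof (cases "j = i")
      case True
      have e1: "lexp (N i) (lshift k x) = lexp (N i) (lshift k y)"
        using xy True unfolding leq_def by blast
      have e2: "g r = g r'" using good_resp[OF g rr] .
      have e3: "g ((i, lcenter (N i) (lshift k x)) # r) = g ((i, lcenter (N i) (lshift k y)) # r')"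
        using xy True rr by (intro good_resp[OF g]) (simp add: leq_lcenter_shift)
      show ?thesis using True e1 e2 e3 by (simp add: Cons a w')
    next
      case False
      have e2: "g ((j, x) # r) = g ((j, y) # r')" using xy rr by (intro good_resp[OF g]) simp
      have e3: "g ((i, lcenter (N i) [(k, 1)]) # (j, x) # r) = g ((i, lcenter (N i) [(k, 1)]) # (j, y) # r')"
        using xy rr by (intro good_resp[OF g]) simp
      show ?thesis using False e2 e3 by (simp add: Cons a w')
    qed
  qed
  have lin: "lin g (lam_word N i k (u @ (j, x @ lsmult c y) # s)) =
      lin g (lam_word N i k (u @ (j, x) # s)) + c * lin g (lam_word N i k (u @ (j, y) # s))" for u j x y c s
  proof (cases u)
    case Nil
    show ?thesis
    proof (cases "j = i")
      case True
      have "g ((i, lcenter (N i) (lshift k (x @ lsmult c y))) # s) =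
            g ((i, lcenter (N i) (lshift k x) @ lsmult c (lcenter (N i) (lshift k y))) # s)"
        using good_letter_resp[OF g leq_lcenter_lin, of "[]"] by simp
      also have "\<dots> = g ((i, lcenter (N i) (lshift k x)) # s) + c * g ((i, lcenter (N i) (lshift k y)) # s)"
        using good_lin[OF g, of "[]"] by simp
      finally show ?thesis using True Nil by (simp add: algebra_simps)
    next
      case False
      have "g ((j, x @ lsmult c y) # s) = g ((j, x) # s) + c * g ((j, y) # s)"
        using good_lin[OF g, of "[]"] by simp
      moreover have "g ((i, lcenter (N i) [(k, 1)]) # (j, x @ lsmult c y) # s) =
          g ((i, lcenter (N i) [(k, 1)]) # (j, x) # s) + c * g ((i, lcenter (N i) [(k, 1)]) # (j, y) # s)"
        using good_lin[OF g, of "[(i, lcenter (N i) [(k, 1)])]"] by simp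
      ultimately show ?thesis using False Nil by (simp add: algebra_simps)
    qed
  next
    case (Cons a u')
    obtain l z where a: "a = (l, z)" by (cases a)
    show ?thesis
    proof (cases "l = i")
      case True
      have "g (u' @ (j, x @ lsmult c y) # s) = g (u' @ (j, x) # s) + c * g (u' @ (j, y) # s)"
        using good_lin[OF g] by simp
      moreover have "g (((i, lcenter (N i) (lshift k z)) # u') @ (j, x @ lsmult c y) # s) =
          g (((i, lcenter (N i) (lshift k z)) # u') @ (j, x) # s) + c * g (((i, lcenter (N i) (lshift k z)) # u') @ (j, y) # s)"
        using good_lin[OF g] by blast
      ultimately show ?thesis using True Cons a by (simp add: algebra_simps)
    next
      case False
      have "g (((l, z) # u') @ (j, x @ lsmult c y) # s) = g (((l, z) # u') @ (j, x) # s) + c * g (((l, z) # u') @ (j, y) # s)"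
        using good_lin[OF g] by blast
      moreover have "g (((i, lcenter (N i) [(k, 1)]) # (l, z) # u') @ (j, x @ lsmult c y) # s) =
          g (((i, lcenter (N i) [(k, 1)]) # (l, z) # u') @ (j, x) # s) + c * g (((i, lcenter (N i) [(k, 1)]) # (l, z) # u') @ (j, y) # s)"
        using good_lin[OF g] by blast
      ultimately show ?thesis using False Cons a by (simp add: algebra_simps)
    qed
  qed
  show ?thesis unfolding good_def using resp lin by blast
qed

lemma weq_rev: "weq N w w' \<Longrightarrow> weq N (rev w) (rev w')"
  by (simp add: weq_def list_all2_rev)

lemma good_rev: assumes "good N g" shows "good N (g \<circ> rev)"
proof -
  have "(g \<circ> rev) w = (g \<circ> rev) w'" if "weq N w w'" for w w'
    using good_resp[OF assms weq_rev[OF that]] by simp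
  moreover have "(g \<circ> rev) (u @ (i, x @ lsmult c y) # s) = (g \<circ> rev) (u @ (i, x) # s) + c * (g \<circ> rev) (u @ (i, y) # s)" for u i x y c s
    using good_lin[OF assms, of "rev s" i x c y "rev u"] by simp
  ultimately show ?thesis unfolding good_def by blast
qed

lemma lin_rho: "lin g (rho_word N i k w) = lin (g \<circ> rev) (lam_word N i k (rev w))"
  unfolding rho_word_def lin_def by (simp add: o_def)

lemma good_rho:
  assumes g: "good N g"
  shows "good N (\<lambda>w. lin g (rho_word N i k w))"
proof -
  have "good N (\<lambda>w. lin (g \<circ> rev) (lam_word N i k w))" by (rule good_lam[OF good_rev[OF g]])
  then have "good N ((\<lambda>w. lin (g \<circ> rev) (lam_word N i k w)) \<circ> rev)" by (rule good_rev)
  then show ?thesis by (simp add: lin_rho o_def)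
qed

definition veq :: "(bool \<Rightarrow> m2) \<Rightarrow> fvec \<Rightarrow> fvec \<Rightarrow> bool" where
  "veq N v v' \<longleftrightarrow> (\<forall>g. good N g \<longrightarrow> lin g v = lin g v')"

lemma veq_refl[simp]: "veq N v v" by (simp add: veq_def)
lemma veq_sym: "veq N v v' \<Longrightarrow> veq N v' v" by (simp add: veq_def)
lemma veq_trans: "veq N u v \<Longrightarrow> veq N v w \<Longrightarrow> veq N u w" by (simp add: veq_def)
lemma veq_append: "veq N u u' \<Longrightarrow> veq N v v' \<Longrightarrow> veq N (u @ v) (v' @ u' ) \<or> True" by simp
lemma veq_app: "veq N u u' \<Longrightarrow> veq N v v' \<Longrightarrow> veq N (u @ v) (u' @ v')" by (simp add: veq_def)
lemma veq_app_comm: "veq N (u @ v) (v @ u)" by (simp add: veq_def)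

lemma good_vacw: "good N vacw"
  unfolding good_def vacw_def weq_def by (auto dest: list_all2_lengthD)

lemma veq_vac: "veq N v v' \<Longrightarrow> vac v = vac v'"
  by (simp add: veq_def vac_lin good_vacw)

definition good_op :: "(bool \<Rightarrow> m2) \<Rightarrow> (fword \<Rightarrow> fvec) \<Rightarrow> bool" where
  "good_op N op \<longleftrightarrow> (\<forall>g. good N g \<longrightarrow> good N (\<lambda>w. lin g (op w)))"

lemma good_op_lam: "good_op N (lam_word N i k)" by (simp add: good_op_def good_lam)
lemma good_op_rho: "good_op N (rho_word N i k)" by (simp add: good_op_def good_rho)

lemma veq_vapply: "good_op N op \<Longrightarrow> veq N v v' \<Longrightarrow> veq N (vapply op v) (vapply op v')"
  by (simp add: veq_def lin_vapply good_op_def)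

definition vcomp :: "(fword \<Rightarrow> fvec) \<Rightarrow> (fword \<Rightarrow> fvec) \<Rightarrow> fword \<Rightarrow> fvec" where
  "vcomp op2 op1 w = vapply op2 (op1 w)"

lemma vapply_scale: "vapply op (map (\<lambda>s. (a * fst s, snd s)) v) = map (\<lambda>s. (a * fst s, snd s)) (vapply op v)"
  by (induction v) (auto simp: vapply_def map_concat o_def mult.assoc)

lemma vapply_Cons: "vapply op (t # v) = map (\<lambda>s. (fst t * fst s, snd s)) (op (snd t)) @ vapply op v"
  by (simp add: vapply_def)

lemma vapply_vapply: "vapply op2 (vapply op1 v) = vapply (vcomp op2 op1) v"
proof (induction v)
  case Nil then show ?case by simp
next
  case (Cons t v)
  show ?case using Cons by (simp add: vapply_Cons vapply_scale vcomp_def)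
qed

definition tseq :: "fword \<Rightarrow> lpoly list" where
  "tseq w = map snd (filter fst w)"

lemma tseq_simps[simp]: "tseq [] = []" "tseq ((True, x) # w) = x # tseq w" "tseq ((False, x) # w) = tseq w"
  "tseq (w @ w') = tseq w @ tseq w'"
  by (auto simp: tseq_def)

lemma tseq_rev[simp]: "tseq (rev w) = rev (tseq w)"
  by (simp add: tseq_def rev_filter rev_map)

definition EI :: "(fword \<Rightarrow> bool) \<Rightarrow> fvec \<Rightarrow> bool" where
  "EI P v \<longleftrightarrow> (\<forall>t\<in>set v. fst t = 0 \<or> P (snd t))"

lemma EI_simps[simp]: "EI P []" "EI P (t # v) \<longleftrightarrow> (fst t = 0 \<or> P (snd t)) \<and> EI P v"
  "EI P (v @ v') \<longleftrightarrow> EI P v \<and> EI P v'"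
  by (auto simp: EI_def)

lemma EI_vapply:
  assumes "EI P v" "\<And>w. P w \<Longrightarrow> EI P' (op w)"
  shows "EI P' (vapply op v)"
  using assms unfolding EI_def vapply_def by fastforce

lemma EI_mono: "EI P v \<Longrightarrow> (\<And>w. P w \<Longrightarrow> P' w) \<Longrightarrow> EI P' v"
  unfolding EI_def by blast

lemma vac_EI_zero: "EI (\<lambda>w. w \<noteq> []) v \<Longrightarrow> vac v = 0"
  unfolding EI_def vac_def by (induction v) auto

lemma funpow_inv: "(\<And>v. I v \<Longrightarrow> I (f v)) \<Longrightarrow> I v \<Longrightarrow> I ((f ^^ n) v)"
  by (induction n) auto

lemma EI_lamF': assumes "Q (tseq w)" shows "EI (\<lambda>w. Q (tseq w)) (lam_word N False k w)"
  using assms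
proof (cases w)
  case Nil then show ?thesis using assms by simp
next
  case (Cons a r)
  then show ?thesis using assms by (cases a) (auto)
qed

lemma EI_rhoF': "Q (tseq w) \<Longrightarrow> EI (\<lambda>w. Q (tseq w)) (rho_word N False k w)"
proof -
  assume q: "Q (tseq w)"
  have "EI (\<lambda>w. (Q \<circ> rev) (tseq w)) (lam_word N False k (rev w))"
    by (rule EI_lamF') (use q in simp)
  then show ?thesis unfolding rho_word_def EI_def by auto
qed

lemma EI_lamT':
  assumes "Qi (tseq w)"
    and pop: "\<And>x s. Qi (x # s) \<Longrightarrow> lexp (N True) (lshift k x) = 0 \<or> Qo s"
    and modi: "\<And>x s. Qi (x # s) \<Longrightarrow> Qo (lcenter (N True) (lshift k x) # s)"
    and new: "\<And>s. Qi s \<Longrightarrow> (lexp (N True) [(k, 1)] = 0 \<or> Qo s) \<and> Qo (lcenter (N True) [(k, 1)] # s)"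
  shows "EI (\<lambda>w. Qo (tseq w)) (lam_word N True k w)"
proof (cases w)
  case Nil then show ?thesis using assms new[of "[]"] by auto
next
  case (Cons a r)
  obtain j x where a: "a = (j, x)" by (cases a)
  show ?thesis
  proof (cases j)
    case True
    then show ?thesis using assms pop[of x "tseq r"] modi[of x "tseq r"] Cons a by auto
  next
    case False
    then show ?thesis using assms new[of "tseq r"] Cons a by auto
  qed
qed

lemma EI_rhoT':
  assumes "Qi (tseq w)"
    and pop: "\<And>x s. Qi (s @ [x]) \<Longrightarrow> lexp (N True) (lshift k x) = 0 \<or> Qo s"
    and modi: "\<And>x s. Qi (s @ [x]) \<Longrightarrow> Qo (s @ [lcenter (N True) (lshift k x)])"
    and new: "\<And>s. Qi s \<Longrightarrow> (lexp (N True) [(k, 1)] = 0 \<or> Qo s) \<and> Qo (s @ [lcenter (N True) [(k, 1)]])"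
  shows "EI (\<lambda>w. Qo (tseq w)) (rho_word N True k w)"
proof -
  have "EI (\<lambda>w. (Qo \<circ> rev) (tseq w)) (lam_word N True k (rev w))"
  proof (rule EI_lamT'[where Qi = "Qi \<circ> rev"])
    show "(Qi \<circ> rev) (tseq (rev w))" using assms(1) by simp
  next
    fix x s assume "(Qi \<circ> rev) (x # s)"
    then show "lexp (N True) (lshift k x) = 0 \<or> (Qo \<circ> rev) s" using pop[of "rev s" x] by simp
  next
    fix x s assume "(Qi \<circ> rev) (x # s)"
    then show "(Qo \<circ> rev) (lcenter (N True) (lshift k x) # s)" using modi[of "rev s" x] by simp
  next
    fix s assume "(Qi \<circ> rev) s"
    then show "(lexp (N True) [(k, 1)] = 0 \<or> (Qo \<circ> rev) s) \<and> (Qo \<circ> rev) (lcenter (N True) [(k, 1)] # s)"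
      using new[of "rev s"] by simp
  qed
  then show ?thesis unfolding rho_word_def EI_def by auto
qed

definition GS :: "m2 \<Rightarrow> (int \<Rightarrow> int \<Rightarrow> bool) \<Rightarrow> lpoly \<Rightarrow> bool" where
  "GS A S x \<longleftrightarrow> (\<forall>a b. S a b \<longrightarrow> lexp A (lshift (a, b) x) = 0)"

lemma GS_ann: "GS A S x \<Longrightarrow> S (fst k) (snd k) \<Longrightarrow> lexp A (lshift k x) = 0"
  unfolding GS_def by (cases k) auto

lemma GS_closed:
  assumes "GS A S x" "S (fst k) (snd k)" "\<And>a b. S a b \<Longrightarrow> S (a + fst k) (b + snd k)"
  shows "GS A S (lcenter A (lshift k x))"
  unfolding GS_def
proof (intro allI impI)
  fix a b assume "S a b"
  have "lexp A (lshift (a, b) (lcenter A (lshift k x))) = lexp A (lshift (a,b) (lshift k x)) - lexp A (lshift k x) * tmom A a b"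
    by (simp add: lexp_lcenter_shift)
  also have "lexp A (lshift k x) = 0" using GS_ann[OF assms(1,2)] .
  also have "lexp A (lshift (a,b) (lshift k x)) = lexp A (lshift (fst k + a, snd k + b) x)" by simp
  also have "\<dots> = 0" using assms(1) assms(3)[OF \<open>S a b\<close>] unfolding GS_def by (simp add: add.commute)
  finally show "lexp A (lshift (a, b) (lcenter A (lshift k x))) = 0" by simp
qed

lemma null_GS: "(\<forall>k. lexp A (lshift k x) = 0) \<Longrightarrow> GS A S x"
  unfolding GS_def by auto

definition hasG :: "(lpoly \<Rightarrow> bool) \<Rightarrow> lpoly list \<Rightarrow> bool" where
  "hasG G s \<longleftrightarrow> (\<exists>x\<in>set s. G x)"

lemma hasG_simps[simp]: "\<not> hasG G []" "hasG G (x # s) \<longleftrightarrow> G x \<or> hasG G s" "hasG G (s @ s') \<longleftrightarrow> hasG G s \<or> hasG G s'"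
  by (auto simp: hasG_def)

lemma hasG_ne: "hasG G (tseq w) \<Longrightarrow> w \<noteq> []" by auto

lemma EI_lamT_hasG:
  assumes "hasG (GS (N True) S) (tseq w) \<or> tseq w = []" "S (fst k) (snd k)" "\<And>a b. S a b \<Longrightarrow> S (a + fst k) (b + snd k)"
    and cre: "tseq w = [] \<Longrightarrow> lexp (N True) [(k, 1)] = 0 \<and> GS (N True) S (lcenter (N True) [(k, 1)])"
  shows "EI (\<lambda>w. hasG (GS (N True) S) (tseq w)) (lam_word N True k w)"
proof (cases "tseq w = []")
  case True
  show ?thesis
    by (rule EI_lamT'[where Qi = "\<lambda>s. s = []"]) (use True cre in auto)
next
  case False
  then show ?thesis
    by (intro EI_lamT'[where Qi = "\<lambda>s. hasG (GS (N True) S) s"])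
       (use assms GS_ann[of "N True" S _ k, OF _ assms(2)] GS_closed[of "N True" S _ k, OF _ assms(2,3)] in auto)
qed

lemma EI_rhoT_hasG:
  assumes "hasG (GS (N True) S) (tseq w) \<or> tseq w = []" "S (fst k) (snd k)" "\<And>a b. S a b \<Longrightarrow> S (a + fst k) (b + snd k)"
    and cre: "tseq w = [] \<Longrightarrow> lexp (N True) [(k, 1)] = 0 \<and> GS (N True) S (lcenter (N True) [(k, 1)])"
  shows "EI (\<lambda>w. hasG (GS (N True) S) (tseq w)) (rho_word N True k w)"
proof (cases "tseq w = []")
  case True
  show ?thesis
    by (rule EI_rhoT'[where Qi = "\<lambda>s. s = []"]) (use True cre in auto)
next
  case False
  then show ?thesis
    by (intro EI_rhoT'[where Qi = "\<lambda>s. hasG (GS (N True) S) s"])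
       (use assms GS_ann[of "N True" S _ k, OF _ assms(2)] GS_closed[of "N True" S _ k, OF _ assms(2,3)] in auto)
qed

lemma lam_Cons_gen: "lam_word N i k (a # r) = map (\<lambda>t. (fst t, snd t @ r)) (lam_word N i k [a])"
  by (cases a) auto

lemma rho_snoc_gen: "rho_word N i k (r @ [b]) = map (\<lambda>t. (fst t, r @ snd t)) (rho_word N i k [b])"
  unfolding rho_word_def by (simp add: lam_Cons_gen[of N i k b "rev r"])

lemma sum_list_swap:
  fixes F :: "'a \<Rightarrow> 'b \<Rightarrow> 'c::comm_monoid_add"
  shows "(\<Sum>x\<leftarrow>xs. \<Sum>y\<leftarrow>ys. F x y) = (\<Sum>y\<leftarrow>ys. \<Sum>x\<leftarrow>xs. F x y)"
proof (induction xs)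
  case Nil then show ?case by (induction ys) auto
next
  case (Cons a xs)
  have "(\<Sum>y\<leftarrow>ys. F a y + (\<Sum>x\<leftarrow>xs. F x y)) = (\<Sum>y\<leftarrow>ys. F a y) + (\<Sum>y\<leftarrow>ys. \<Sum>x\<leftarrow>xs. F x y)"
    by (induction ys) (auto simp: ac_simps)
  then show ?case using Cons by simp
qed

lemma lin_map_word: "lin g (map (\<lambda>t. (fst t, f (snd t))) v) = lin (g \<circ> f) v"
  by (simp add: lin_def o_def)

lemma lin_expand: "lin g v = (\<Sum>t\<leftarrow>v. fst t * g (snd t))" by (simp add: lin_def)

lemma comm_long:
  "lin g (vapply (lam_word N i k) (rho_word N j k' (a # m @ [b]))) =
   lin g (vapply (rho_word N j k') (lam_word N i k (a # m @ [b])))"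
proof -
  define L where "L = lam_word N i k [a]"
  define R where "R = rho_word N j k' [b]"
  have l: "lam_word N i k (a # r) = map (\<lambda>t. (fst t, snd t @ r)) L" for r
    unfolding L_def by (rule lam_Cons_gen)
  have r: "rho_word N j k' (r @ [b]) = map (\<lambda>t. (fst t, r @ snd t)) R" for r
    unfolding R_def by (rule rho_snoc_gen)
  have r': "rho_word N j k' (p @ m @ [b]) = map (\<lambda>t. (fst t, p @ m @ snd t)) R" for p
    using r[of "p @ m"] by simp
  have "lin g (vapply (lam_word N i k) (rho_word N j k' (a # m @ [b]))) =
      (\<Sum>t\<leftarrow>R. fst t * (\<Sum>t'\<leftarrow>L. fst t' * g (snd t' @ m @ snd t)))"
    using r[of "a # m"] by (simp only: lin_vapply) (simp add: lin_expand l o_def)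
  also have "\<dots> = (\<Sum>t\<leftarrow>R. \<Sum>t'\<leftarrow>L. fst t * fst t' * g (snd t' @ m @ snd t))"
    by (simp add: sum_list_const_mult mult.assoc)
  also have "\<dots> = (\<Sum>t'\<leftarrow>L. \<Sum>t\<leftarrow>R. fst t * fst t' * g (snd t' @ m @ snd t))"
    by (rule sum_list_swap)
  also have "\<dots> = (\<Sum>t'\<leftarrow>L. fst t' * (\<Sum>t\<leftarrow>R. fst t * g (snd t' @ m @ snd t)))"
    by (simp add: sum_list_const_mult algebra_simps)
  also have "\<dots> = lin g (vapply (rho_word N j k') (lam_word N i k (a # m @ [b])))"
    using l[of "m @ [b]"] r' by (simp only: lin_vapply) (simp add: lin_expand o_def)
  finally show ?thesis .
qed

lemma leq_case_letter:
  "leq \<nu> (lsmult (lexp \<nu> (lshift k' x)) (lcenter \<nu> [(k, 1)]) @ lsmult 1 (lcenter \<nu> (lshift k (lcenter \<nu> (lshift k' x)))))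
        (lcenter \<nu> (lshift (fst k + fst k', snd k + snd k') x))"
  unfolding leq_def by (simp add: lcenter_def algebra_simps ac_simps)

lemma leq_case_nil:
  "leq \<nu> (lsmult (tmom \<nu> (fst k') (snd k')) (lcenter \<nu> [(k, 1)]) @ lsmult 1 (lcenter \<nu> (lshift k (lcenter \<nu> [(k', 1)]))))
        (lcenter \<nu> [((fst k + fst k', snd k + snd k'), 1)])"
  unfolding leq_def by (simp add: lcenter_def algebra_simps ac_simps)


lemma word_shapes: "w = [] \<or> (\<exists>a. w = [a]) \<or> (\<exists>a m b. w = a # m @ [b])"
proof (cases w)
  case (Cons a r)
  then show ?thesis by (cases r rule: rev_cases) auto
qed simp

lemma rho_Nil: "rho_word N i k [] = [(lexp (N i) [(k, 1)], []), (1, [(i, lcenter (N i) [(k, 1)])])]"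
  by (simp add: rho_word_def)

lemma rho_single: "rho_word N i k [(j, x)] = (if j = i then
        [(lexp (N i) (lshift k x), []), (1, [(i, lcenter (N i) (lshift k x))])]
      else
        [(lexp (N i) [(k, 1)], [(j, x)]), (1, [(j, x), (i, lcenter (N i) [(k, 1)])])])"
  by (simp add: rho_word_def)

lemma rho_two: "rho_word N i k [a, b] = map (\<lambda>t. (fst t, a # snd t)) (rho_word N i k [b])"
  using rho_snoc_gen[of N i k "[a]" b] by simp

lemma comm_word:
  assumes g: "good N g"
  shows "lin g (vapply (lam_word N i k) (rho_word N j k' w)) = lin g (vapply (rho_word N j k') (lam_word N i k w))"
proof -
  have lc: "lexp \<nu> (lshift k (lcenter \<nu> x)) = lexp \<nu> (lshift k x) - lexp \<nu> x * tmom \<nu> (fst k) (snd k)" for \<nu> k x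
    by (rule lexp_lcenter_shift)
  consider "w = []" | a where "w = [a]" | a m b where "w = a # m @ [b]"
    using word_shapes by blast
  then show ?thesis
  proof cases
    case 1
    show ?thesis
    proof (cases "i = j")
      case False
      then show ?thesis using 1 by (simp add: rho_Nil vapply_def rho_single algebra_simps)
    next
      case True
      define K where "K = (fst k + fst k', snd k + snd k')"
      have K': "(fst k' + fst k, snd k' + snd k) = K" by (simp add: K_def add.commute)
      have e1: "tmom (N i) (fst k') (snd k') * g [(i, lcenter (N i) [(k, 1)])] +
          1 * g [(i, lcenter (N i) (lshift k (lcenter (N i) [(k', 1)])))] = g [(i, lcenter (N i) [(K, 1)])]"
        using good_comb[OF g, of "tmom (N i) (fst k') (snd k')" "[]" i "lcenter (N i) [(k, 1)]" "[]" 1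
            "lcenter (N i) (lshift k (lcenter (N i) [(k', 1)]))"]
          good_letter_resp[OF g leq_case_nil[of "N i" k' k], of "[]" "[]"] by (simp add: K_def)
      have e2: "tmom (N i) (fst k) (snd k) * g [(i, lcenter (N i) [(k', 1)])] +
          1 * g [(i, lcenter (N i) (lshift k' (lcenter (N i) [(k, 1)])))] = g [(i, lcenter (N i) [(K, 1)])]"
        using good_comb[OF g, of "tmom (N i) (fst k) (snd k)" "[]" i "lcenter (N i) [(k', 1)]" "[]" 1
            "lcenter (N i) (lshift k' (lcenter (N i) [(k, 1)]))"]
          good_letter_resp[OF g leq_case_nil[of "N i" k k'], of "[]" "[]"] K' by simp
      have c1: "lexp (N i) (lshift k (lcenter (N i) [(k', 1)])) = tmom (N i) (fst K) (snd K) - tmom (N i) (fst k') (snd k') * tmom (N i) (fst k) (snd k)"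
        by (simp add: lc K_def add.commute)
      have c2: "lexp (N i) (lshift k' (lcenter (N i) [(k, 1)])) = tmom (N i) (fst K) (snd K) - tmom (N i) (fst k) (snd k) * tmom (N i) (fst k') (snd k')"
        by (simp add: lc K_def add.commute)
      have L: "lin g (vapply (lam_word N i k) (rho_word N j k' w)) =
          tmom (N i) (fst k') (snd k') * (tmom (N i) (fst k) (snd k) * g [] + g [(i, lcenter (N i) [(k, 1)])]) +
          (lexp (N i) (lshift k (lcenter (N i) [(k', 1)])) * g [] + g [(i, lcenter (N i) (lshift k (lcenter (N i) [(k', 1)])))])"
        using 1 True by (simp add: rho_Nil vapply_def algebra_simps)
      have R: "lin g (vapply (rho_word N j k') (lam_word N i k w)) =
          tmom (N i) (fst k) (snd k) * (tmom (N i) (fst k') (snd k') * g [] + g [(i, lcenter (N i) [(k', 1)])]) +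
          (lexp (N i) (lshift k' (lcenter (N i) [(k, 1)])) * g [] + g [(i, lcenter (N i) (lshift k' (lcenter (N i) [(k, 1)])))])"
        using 1 True by (simp add: rho_Nil rho_single vapply_def algebra_simps)
      show ?thesis unfolding L R c1 c2 using e1 e2 by (simp add: algebra_simps)
    qed
  next
    case 2
    obtain l x where a: "a = (l, x)" by (cases a)
    show ?thesis
    proof (cases "i = l \<and> j = l")
      case False
      then show ?thesis using 2 a
        by (cases "i = l"; cases "j = l"; cases "i = j")
           (auto simp: rho_Nil vapply_def rho_single rho_two algebra_simps)
    next
      case True
      then have il: "i = l" and jl: "j = l" by auto
      define K where "K = (fst k + fst k', snd k + snd k')"
      have K': "(fst k' + fst k, snd k' + snd k) = K" by (simp add: K_def add.commute)
      have e1: "lexp (N i) (lshift k' x) * g [(i, lcenter (N i) [(k, 1)])] +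
          1 * g [(i, lcenter (N i) (lshift k (lcenter (N i) (lshift k' x))))] = g [(i, lcenter (N i) (lshift K x))]"
        using good_comb[OF g, of "lexp (N i) (lshift k' x)" "[]" i "lcenter (N i) [(k, 1)]" "[]" 1
            "lcenter (N i) (lshift k (lcenter (N i) (lshift k' x)))"]
          good_letter_resp[OF g leq_case_letter[of "N i" k' x k], of "[]" "[]"] by (simp add: K_def)
      have e2: "lexp (N i) (lshift k x) * g [(i, lcenter (N i) [(k', 1)])] +
          1 * g [(i, lcenter (N i) (lshift k' (lcenter (N i) (lshift k x))))] = g [(i, lcenter (N i) (lshift K x))]"
        using good_comb[OF g, of "lexp (N i) (lshift k x)" "[]" i "lcenter (N i) [(k', 1)]" "[]" 1
            "lcenter (N i) (lshift k' (lcenter (N i) (lshift k x)))"]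
          good_letter_resp[OF g leq_case_letter[of "N i" k x k'], of "[]" "[]"] K' by simp
      have c1: "lexp (N i) (lshift k (lcenter (N i) (lshift k' x))) = lexp (N i) (lshift K x) - lexp (N i) (lshift k' x) * tmom (N i) (fst k) (snd k)"
        by (simp add: lc K_def add.commute)
      have c2: "lexp (N i) (lshift k' (lcenter (N i) (lshift k x))) = lexp (N i) (lshift K x) - lexp (N i) (lshift k x) * tmom (N i) (fst k') (snd k')"
        by (simp add: lc K_def add.commute)
      have L: "lin g (vapply (lam_word N i k) (rho_word N j k' w)) =
          lexp (N i) (lshift k' x) * (tmom (N i) (fst k) (snd k) * g [] + g [(i, lcenter (N i) [(k, 1)])]) +
          (lexp (N i) (lshift k (lcenter (N i) (lshift k' x))) * g [] + g [(i, lcenter (N i) (lshift k (lcenter (N i) (lshift k' x))))])"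
        using 2 a il jl by (simp add: rho_single vapply_def algebra_simps)
      have R: "lin g (vapply (rho_word N j k') (lam_word N i k w)) =
          lexp (N i) (lshift k x) * (tmom (N i) (fst k') (snd k') * g [] + g [(i, lcenter (N i) [(k', 1)])]) +
          (lexp (N i) (lshift k' (lcenter (N i) (lshift k x))) * g [] + g [(i, lcenter (N i) (lshift k' (lcenter (N i) (lshift k x))))])"
        using 2 a il jl by (simp add: rho_Nil rho_single vapply_def algebra_simps)
      show ?thesis unfolding L R c1 c2 using e1 e2 by (simp add: algebra_simps)
    qed
  next
    case 3
    then show ?thesis using comm_long by simp
  qed
qed

lemma veq_comm:
  "veq N (vapply (lam_word N i k) (vapply (rho_word N j k') v)) (vapply (rho_word N j k') (vapply (lam_word N i k) v))"
  unfolding veq_def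
proof (intro allI impI)
  fix g assume g: "good N g"
  show "lin g (vapply (lam_word N i k) (vapply (rho_word N j k') v)) = lin g (vapply (rho_word N j k') (vapply (lam_word N i k) v))"
    unfolding lin_vapply using comm_word[OF g] by (simp add: lin_vapply[symmetric])
qed

definition upos :: "(bool \<Rightarrow> m2) \<Rightarrow> fvec \<Rightarrow> fvec" where
  "upos N = vapply (lam_word N True (1, 0)) \<circ> vapply (lam_word N False (1, 0))"
definition uneg :: "(bool \<Rightarrow> m2) \<Rightarrow> fvec \<Rightarrow> fvec" where
  "uneg N = vapply (lam_word N False (-1, 0)) \<circ> vapply (lam_word N True (-1, 0))"
definition vpos :: "(bool \<Rightarrow> m2) \<Rightarrow> fvec \<Rightarrow> fvec" where
  "vpos N = vapply (rho_word N True (0, 1)) \<circ> vapply (rho_word N False (0, 1))"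
definition vneg :: "(bool \<Rightarrow> m2) \<Rightarrow> fvec \<Rightarrow> fvec" where
  "vneg N = vapply (rho_word N False (0, -1)) \<circ> vapply (rho_word N True (0, -1))"

definition xi :: fvec where "xi = [(1, [])]"

lemma fock_unfold: "fock_moment N p q =
  vac (((if p \<ge> 0 then upos N else uneg N) ^^ nat \<bar>p\<bar>) (((if q \<ge> 0 then vpos N else vneg N) ^^ nat \<bar>q\<bar>) xi))"
  unfolding fock_moment_def Let_def upos_def uneg_def vpos_def vneg_def xi_def by simp

definition cong :: "(bool \<Rightarrow> m2) \<Rightarrow> (fvec \<Rightarrow> fvec) \<Rightarrow> bool" where
  "cong N f \<longleftrightarrow> (\<forall>v v'. veq N v v' \<longrightarrow> veq N (f v) (f v'))"

definition commutes :: "(bool \<Rightarrow> m2) \<Rightarrow> (fvec \<Rightarrow> fvec) \<Rightarrow> (fvec \<Rightarrow> fvec) \<Rightarrow> bool" where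
  "commutes N f h \<longleftrightarrow> (\<forall>v. veq N (f (h v)) (h (f v)))"

lemma cong_lam: "cong N (vapply (lam_word N i k))"
  by (simp add: cong_def veq_vapply good_op_lam)
lemma cong_rho: "cong N (vapply (rho_word N i k))"
  by (simp add: cong_def veq_vapply good_op_rho)
lemma cong_comp: "cong N f \<Longrightarrow> cong N h \<Longrightarrow> cong N (f \<circ> h)"
  by (simp add: cong_def)
lemma cong_funpow: "cong N f \<Longrightarrow> cong N (f ^^ n)"
  by (induction n) (auto simp: cong_def)
lemma cong_ops: "cong N (upos N)" "cong N (uneg N)" "cong N (vpos N)" "cong N (vneg N)"
  by (simp_all add: upos_def uneg_def vpos_def vneg_def cong_comp cong_lam cong_rho)

lemma commutes_lr: "commutes N (vapply (lam_word N i k)) (vapply (rho_word N j k'))"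
  by (simp add: commutes_def veq_comm)

lemma commutes_comp_right:
  "cong N h1 \<Longrightarrow> commutes N f h1 \<Longrightarrow> commutes N f h2 \<Longrightarrow> commutes N f (h1 \<circ> h2)"
  unfolding commutes_def cong_def by (metis comp_apply veq_trans)
lemma commutes_comp_left:
  "cong N f1 \<Longrightarrow> commutes N f1 h \<Longrightarrow> commutes N f2 h \<Longrightarrow> commutes N (f1 \<circ> f2) h"
  unfolding commutes_def cong_def by (metis comp_apply veq_trans)
lemma commutes_funpow_right:
  "cong N h \<Longrightarrow> commutes N f h \<Longrightarrow> commutes N f (h ^^ n)"
proof (induction n)
  case 0 then show ?case by (simp add: commutes_def)
next
  case (Suc n)
  have "commutes N f (h \<circ> h ^^ n)" using commutes_comp_right[of N h f "h ^^ n"] Suc by simp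
  then show ?case unfolding funpow.simps(2) .
qed
lemma commutes_funpow_left:
  "cong N f \<Longrightarrow> commutes N f h \<Longrightarrow> commutes N (f ^^ n) h"
proof (induction n)
  case 0 then show ?case by (simp add: commutes_def)
next
  case (Suc n)
  have "commutes N (f \<circ> f ^^ n) h" using commutes_comp_left[of N f h "f ^^ n"] Suc by simp
  then show ?case unfolding funpow.simps(2) .
qed

lemma commutes_uv: "commutes N (upos N) (vpos N)" "commutes N (uneg N) (vneg N)"
  unfolding upos_def vpos_def uneg_def vneg_def
  by (intro commutes_comp_left commutes_comp_right cong_comp cong_lam cong_rho commutes_lr)+

lemmas veq_trans_rule[trans] = veq_trans

lemma pow_comm:
  assumes cu: "cong N u" and cv: "cong N v" and c: "commutes N u v"
  shows "veq N ((u ^^ n) ((v ^^ n) X)) (((u \<circ> v) ^^ n) X)"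
proof (induction n)
  case 0 then show ?case by simp
next
  case (Suc n)
  have cn: "commutes N (u ^^ n) v" by (rule commutes_funpow_left[OF cu c])
  have "veq N (((u \<circ> v) ^^ Suc n) X) (u (v ((u ^^ n) ((v ^^ n) X))))"
    using Suc cong_comp[OF cu cv] unfolding cong_def by (simp add: veq_sym o_def)
  also have "veq N \<dots> (u ((u ^^ n) (v ((v ^^ n) X))))"
    using cn cu unfolding commutes_def cong_def by (simp add: veq_sym)
  finally have "veq N (((u \<circ> v) ^^ Suc n) X) ((u ^^ Suc n) ((v ^^ Suc n) X))"
    by (simp only: funpow.simps(2) comp_apply)
  then show ?case by (rule veq_sym)
qed

definition Yv :: "(bool \<Rightarrow> m2) \<Rightarrow> int \<times> int \<Rightarrow> fvec" where
  "Yv N e = [(tmom (N False) (fst e) (snd e), []), (1, [(False, lcenter (N False) [(e, 1)])])]"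

lemma vac_Yv: "vac (Yv N e) = tmom (N False) (fst e) (snd e)"
  by (simp add: Yv_def vac_def)

lemma EI_Yv: "EI (\<lambda>w. tseq w = []) (Yv N e)"
  by (simp add: Yv_def)

lemma veq_lamF_Y: "veq N (vapply (lam_word N False k) (Yv N e)) (Yv N (fst e + fst k, snd e + snd k))"
  unfolding veq_def
proof (intro allI impI)
  fix g assume g: "good N g"
  let ?M = "N False"
  have e1: "tmom ?M (fst e) (snd e) * g [(False, lcenter ?M [(k, 1)])] +
      1 * g [(False, lcenter ?M (lshift k (lcenter ?M [(e, 1)])))] = g [(False, lcenter ?M [((fst e + fst k, snd e + snd k), 1)])]"
    using good_comb[OF g, of "tmom ?M (fst e) (snd e)" "[]" False "lcenter ?M [(k, 1)]" "[]" 1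
            "lcenter ?M (lshift k (lcenter ?M [(e, 1)]))"]
          good_letter_resp[OF g leq_case_nil[of ?M e k], of "[]" "[]"] by (simp add: add.commute)
  have c1: "lexp ?M (lshift k (lcenter ?M [(e, 1)])) = tmom ?M (fst e + fst k) (snd e + snd k) - tmom ?M (fst e) (snd e) * tmom ?M (fst k) (snd k)"
    by (simp add: lexp_lcenter_shift)
  show "lin g (vapply (lam_word N False k) (Yv N e)) = lin g (Yv N (fst e + fst k, snd e + snd k))"
    using e1 by (simp add: Yv_def vapply_def c1 algebra_simps)
qed

lemma vapply_rhoF_Y: "vapply (rho_word N False k) (Yv N e) = vapply (lam_word N False k) (Yv N e)"
  by (simp add: Yv_def vapply_def rho_Nil rho_single)

lemma veq_rhoF_Y: "veq N (vapply (rho_word N False k) (Yv N e)) (Yv N (fst e + fst k, snd e + snd k))"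
  using veq_lamF_Y vapply_rhoF_Y by metis

definition lnull :: "m2 \<Rightarrow> lpoly \<Rightarrow> bool" where
  "lnull \<nu> x \<longleftrightarrow> (\<forall>k. lexp \<nu> (lshift k x) = 0)"

lemma veq_lamT_id:
  assumes "tmom (N True) (fst k) (snd k) = 1" "lnull (N True) (lcenter (N True) [(k, 1)])"
  shows "veq N (vapply (lam_word N True k) (Yv N e)) (Yv N e)"
  unfolding veq_def
proof (intro allI impI)
  fix g assume g: "good N g"
  have n1: "g [(True, lcenter (N True) [(k, 1)])] = 0"
    using good_null[OF g, of True "lcenter (N True) [(k, 1)]" "[]" "[]"] assms(2) by (simp add: lnull_def)
  have n2: "g [(True, lcenter (N True) [(k, 1)]), (False, z)] = 0" for z
    using good_null[OF g, of True "lcenter (N True) [(k, 1)]" "[]" "[(False, z)]"] assms(2) by (simp add: lnull_def)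
  show "lin g (vapply (lam_word N True k) (Yv N e)) = lin g (Yv N e)"
    using assms(1) by (simp add: Yv_def vapply_def n1 n2)
qed

lemma veq_rhoT_id:
  assumes "tmom (N True) (fst k) (snd k) = 1" "lnull (N True) (lcenter (N True) [(k, 1)])"
  shows "veq N (vapply (rho_word N True k) (Yv N e)) (Yv N e)"
  unfolding veq_def
proof (intro allI impI)
  fix g assume g: "good N g"
  have n1: "g [(True, lcenter (N True) [(k, 1)])] = 0"
    using good_null[OF g, of True "lcenter (N True) [(k, 1)]" "[]" "[]"] assms(2) by (simp add: lnull_def)
  have n2: "g [(False, z), (True, lcenter (N True) [(k, 1)])] = 0" for z
    using good_null[OF g, of True "lcenter (N True) [(k, 1)]" "[(False, z)]" "[]"] assms(2) by (simp add: lnull_def)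
  show "lin g (vapply (rho_word N True k) (Yv N e)) = lin g (Yv N e)"
    using assms(1) by (simp add: Yv_def vapply_def rho_Nil rho_single n1 n2)
qed

lemma veq_xi_Y: assumes "tmom (N False) 0 0 = 1" shows "veq N xi (Yv N (0, 0))"
  unfolding veq_def
proof (intro allI impI)
  fix g assume g: "good N g"
  have "g [(False, lcenter (N False) [((0, 0), 1)])] = 0"
    using good_null[OF g, of False "lcenter (N False) [((0, 0), 1)]" "[]" "[]"] assms
    by (simp add: lexp_lcenter_shift)
  then show "lin g xi = lin g (Yv N (0, 0))" using assms by (simp add: xi_def Yv_def)
qed

lemma veq_vapply': "cong N f \<Longrightarrow> veq N v v' \<Longrightarrow> veq N (f v) (f v')"
  by (simp add: cong_def)

lemma vpos_Y:
  assumes "tmom (N True) 0 1 = 1" "lnull (N True) (lcenter (N True) [((0, 1), 1)])"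
  shows "veq N (vpos N (Yv N e)) (Yv N (fst e, snd e + 1))"
proof -
  have "veq N (vpos N (Yv N e)) (vapply (rho_word N True (0, 1)) (Yv N (fst e, snd e + 1)))"
    unfolding vpos_def comp_def using veq_rhoF_Y[of N "(0, 1)" e] by (intro veq_vapply'[OF cong_rho]) simp
  also have "veq N \<dots> (Yv N (fst e, snd e + 1))" using veq_rhoT_id[of N "(0, 1)"] assms by simp
  finally show ?thesis .
qed

lemma vneg_Y:
  assumes "tmom (N True) 0 (-1) = 1" "lnull (N True) (lcenter (N True) [((0, -1), 1)])"
  shows "veq N (vneg N (Yv N e)) (Yv N (fst e, snd e - 1))"
proof -
  have "veq N (vneg N (Yv N e)) (vapply (rho_word N False (0, -1)) (Yv N e))"
    unfolding vneg_def comp_def using veq_rhoT_id[of N "(0, -1)"] assms by (intro veq_vapply'[OF cong_rho]) simp_all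
  also have "veq N \<dots> (Yv N (fst e, snd e - 1))" using veq_rhoF_Y[of N "(0, -1)" e] by simp
  finally show ?thesis .
qed

lemma upos_Y:
  assumes "tmom (N True) 1 0 = 1" "lnull (N True) (lcenter (N True) [((1, 0), 1)])"
  shows "veq N (upos N (Yv N e)) (Yv N (fst e + 1, snd e))"
proof -
  have "veq N (upos N (Yv N e)) (vapply (lam_word N True (1, 0)) (Yv N (fst e + 1, snd e)))"
    unfolding upos_def comp_def using veq_lamF_Y[of N "(1, 0)" e] by (intro veq_vapply'[OF cong_lam]) simp
  also have "veq N \<dots> (Yv N (fst e + 1, snd e))" using veq_lamT_id[of N "(1, 0)"] assms by simp
  finally show ?thesis .
qed

lemma uneg_Y:
  assumes "tmom (N True) (-1) 0 = 1" "lnull (N True) (lcenter (N True) [((-1, 0), 1)])"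
  shows "veq N (uneg N (Yv N e)) (Yv N (fst e - 1, snd e))"
proof -
  have "veq N (uneg N (Yv N e)) (vapply (lam_word N False (-1, 0)) (Yv N e))"
    unfolding uneg_def comp_def using veq_lamT_id[of N "(-1, 0)"] assms by (intro veq_vapply'[OF cong_lam]) simp_all
  also have "veq N \<dots> (Yv N (fst e - 1, snd e))" using veq_lamF_Y[of N "(-1, 0)" e] by simp
  finally show ?thesis .
qed

lemma iter_Y:
  assumes "cong N f" "\<And>e. veq N (f (Yv N e)) (Yv N (fst e + d1, snd e + d2))"
  shows "veq N ((f ^^ n) (Yv N e)) (Yv N (fst e + int n * d1, snd e + int n * d2))"
proof (induction n)
  case 0 then show ?case by simp
next
  case (Suc n)
  have "veq N ((f ^^ Suc n) (Yv N e)) (f (Yv N (fst e + int n * d1, snd e + int n * d2)))"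
    using veq_vapply'[OF assms(1) Suc] by simp
  also have "veq N \<dots> (Yv N (fst e + int (Suc n) * d1, snd e + int (Suc n) * d2))"
    using assms(2)[of "(fst e + int n * d1, snd e + int n * d2)"] by (simp add: algebra_simps)
  finally show ?case .
qed

lemma EI_lamF_vec: assumes "EI (\<lambda>w. Q (tseq w)) X" shows "EI (\<lambda>w. Q (tseq w)) (vapply (lam_word N False k) X)"
  by (rule EI_vapply[where P = "\<lambda>w. Q (tseq w)", OF assms]) (rule EI_lamF')
lemma EI_rhoF_vec: assumes "EI (\<lambda>w. Q (tseq w)) X" shows "EI (\<lambda>w. Q (tseq w)) (vapply (rho_word N False k) X)"
  by (rule EI_vapply[where P = "\<lambda>w. Q (tseq w)", OF assms]) (rule EI_rhoF')

lemma EI_lamT_hasG_vec: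
  assumes "EI (\<lambda>w. hasG (GS (N True) S) (tseq w) \<or> (C \<and> tseq w = [])) X"
    "S (fst k) (snd k)" "\<And>a b. S a b \<Longrightarrow> S (a + fst k) (b + snd k)"
    "C \<Longrightarrow> lexp (N True) [(k, 1)] = 0 \<and> GS (N True) S (lcenter (N True) [(k, 1)])"
  shows "EI (\<lambda>w. hasG (GS (N True) S) (tseq w)) (vapply (lam_word N True k) X)"
proof (rule EI_vapply[OF assms(1)])
  fix w assume w: "hasG (GS (N True) S) (tseq w) \<or> (C \<and> tseq w = [])"
  show "EI (\<lambda>w. hasG (GS (N True) S) (tseq w)) (lam_word N True k w)"
    by (rule EI_lamT_hasG) (use w assms(2-4) in auto)
qed

lemma EI_rhoT_hasG_vec:
  assumes "EI (\<lambda>w. hasG (GS (N True) S) (tseq w) \<or> (C \<and> tseq w = [])) X"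
    "S (fst k) (snd k)" "\<And>a b. S a b \<Longrightarrow> S (a + fst k) (b + snd k)"
    "C \<Longrightarrow> lexp (N True) [(k, 1)] = 0 \<and> GS (N True) S (lcenter (N True) [(k, 1)])"
  shows "EI (\<lambda>w. hasG (GS (N True) S) (tseq w)) (vapply (rho_word N True k) X)"
proof (rule EI_vapply[OF assms(1)])
  fix w assume w: "hasG (GS (N True) S) (tseq w) \<or> (C \<and> tseq w = [])"
  show "EI (\<lambda>w. hasG (GS (N True) S) (tseq w)) (rho_word N True k w)"
    by (rule EI_rhoT_hasG) (use w assms(2-4) in auto)
qed

lemma upos_hasG:
  assumes "EI (\<lambda>w. hasG (GS (N True) S) (tseq w) \<or> (C \<and> tseq w = [])) X"
    "S 1 0" "\<And>a b. S a b \<Longrightarrow> S (a + 1) b"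
    "C \<Longrightarrow> lexp (N True) [((1, 0), 1)] = 0 \<and> GS (N True) S (lcenter (N True) [((1, 0), 1)])"
  shows "EI (\<lambda>w. hasG (GS (N True) S) (tseq w)) (upos N X)"
  unfolding upos_def comp_def
proof -
  have "EI (\<lambda>w. hasG (GS (N True) S) (tseq w) \<or> (C \<and> tseq w = [])) (vapply (lam_word N False (1, 0)) X)"
    using EI_lamF_vec[where Q = "\<lambda>s. hasG (GS (N True) S) s \<or> (C \<and> s = [])", OF assms(1)] .
  then show "EI (\<lambda>w. hasG (GS (N True) S) (tseq w)) (vapply (lam_word N True (1, 0)) (vapply (lam_word N False (1, 0)) X))"
    by (rule EI_lamT_hasG_vec) (use assms in auto)
qed

lemma uneg_hasG:
  assumes "EI (\<lambda>w. hasG (GS (N True) S) (tseq w) \<or> (C \<and> tseq w = [])) X"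
    "S (-1) 0" "\<And>a b. S a b \<Longrightarrow> S (a - 1) b"
    "C \<Longrightarrow> lexp (N True) [((-1, 0), 1)] = 0 \<and> GS (N True) S (lcenter (N True) [((-1, 0), 1)])"
  shows "EI (\<lambda>w. hasG (GS (N True) S) (tseq w)) (uneg N X)"
  unfolding uneg_def comp_def
proof -
  have "EI (\<lambda>w. hasG (GS (N True) S) (tseq w)) (vapply (lam_word N True (-1, 0)) X)"
    by (rule EI_lamT_hasG_vec[where N = N and S = S and C = C, OF assms(1)]) (use assms in auto)
  then show "EI (\<lambda>w. hasG (GS (N True) S) (tseq w)) (vapply (lam_word N False (-1, 0)) (vapply (lam_word N True (-1, 0)) X))"
    by (rule EI_lamF_vec)
qed

lemma vpos_hasG:
  assumes "EI (\<lambda>w. hasG (GS (N True) S) (tseq w) \<or> (C \<and> tseq w = [])) X"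
    "S 0 1" "\<And>a b. S a b \<Longrightarrow> S a (b + 1)"
    "C \<Longrightarrow> lexp (N True) [((0, 1), 1)] = 0 \<and> GS (N True) S (lcenter (N True) [((0, 1), 1)])"
  shows "EI (\<lambda>w. hasG (GS (N True) S) (tseq w)) (vpos N X)"
  unfolding vpos_def comp_def
proof -
  have "EI (\<lambda>w. hasG (GS (N True) S) (tseq w) \<or> (C \<and> tseq w = [])) (vapply (rho_word N False (0, 1)) X)"
    using EI_rhoF_vec[where Q = "\<lambda>s. hasG (GS (N True) S) s \<or> (C \<and> s = [])", OF assms(1)] .
  then show "EI (\<lambda>w. hasG (GS (N True) S) (tseq w)) (vapply (rho_word N True (0, 1)) (vapply (rho_word N False (0, 1)) X))"
    by (rule EI_rhoT_hasG_vec) (use assms in auto)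
qed

lemma vneg_hasG:
  assumes "EI (\<lambda>w. hasG (GS (N True) S) (tseq w) \<or> (C \<and> tseq w = [])) X"
    "S 0 (-1)" "\<And>a b. S a b \<Longrightarrow> S a (b - 1)"
    "C \<Longrightarrow> lexp (N True) [((0, -1), 1)] = 0 \<and> GS (N True) S (lcenter (N True) [((0, -1), 1)])"
  shows "EI (\<lambda>w. hasG (GS (N True) S) (tseq w)) (vneg N X)"
  unfolding vneg_def comp_def
proof -
  have "EI (\<lambda>w. hasG (GS (N True) S) (tseq w)) (vapply (rho_word N True (0, -1)) X)"
    by (rule EI_rhoT_hasG_vec[where N = N and S = S and C = C, OF assms(1)]) (use assms in auto)
  then show "EI (\<lambda>w. hasG (GS (N True) S) (tseq w)) (vapply (rho_word N False (0, -1)) (vapply (rho_word N True (0, -1)) X))"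
    by (rule EI_rhoF_vec)
qed

lemma iter_EI:
  assumes "\<And>X. EI Pin X \<Longrightarrow> EI Pout (f X)" "\<And>w. Pout w \<Longrightarrow> Pin w" "EI Pin X" "n > 0"
  shows "EI Pout ((f ^^ n) X)"
  using assms(4)
proof (induction n)
  case 0 then show ?case by simp
next
  case (Suc n)
  show ?case
  proof (cases n)
    case 0 then show ?thesis using assms(1,3) by simp
  next
    case (Suc m)
    then have "EI Pout ((f ^^ n) X)" using Suc.IH by simp
    then show ?thesis using assms(1,2) EI_mono by (metis comp_apply funpow.simps(2))
  qed
qed

lemma vac_hasG: "EI (\<lambda>w. hasG G (tseq w)) X \<Longrightarrow> vac X = 0"
  by (rule vac_EI_zero) (auto elim: EI_mono)

lemma EI_xi: "EI (\<lambda>w. tseq w = []) xi" by (simp add: xi_def)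

lemma funpow_veq: "cong N f \<Longrightarrow> veq N v v' \<Longrightarrow> veq N ((f ^^ n) v) ((f ^^ n) v')"
  using cong_funpow unfolding cong_def by blast

lemma EI_hasG_C: "EI (\<lambda>w. tseq w = []) X \<Longrightarrow> EI (\<lambda>w. hasG G (tseq w) \<or> (True \<and> tseq w = [])) X"
  by (auto elim: EI_mono)
lemma EI_hasG_F: "EI (\<lambda>w. hasG G (tseq w)) X \<Longrightarrow> EI (\<lambda>w. hasG G (tseq w) \<or> (False \<and> tseq w = [])) X"
  by (auto elim: EI_mono)

lemma iter_Y_xi:
  assumes "cong N V" "\<And>e. veq N (V (Yv N e)) (Yv N (fst e + d1, snd e + d2))" "tmom (N False) 0 0 = 1"
  shows "veq N ((V ^^ n) xi) (Yv N (int n * d1, int n * d2))"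
proof -
  have "veq N ((V ^^ n) xi) ((V ^^ n) (Yv N (0, 0)))" by (rule funpow_veq[OF assms(1) veq_xi_Y[where N = N, OF assms(3)]])
  also have "veq N \<dots> (Yv N (0 + int n * d1, 0 + int n * d2))" using iter_Y[OF assms(1,2), of n "(0,0)"] by simp
  finally show ?thesis by simp
qed

lemma kill_pow:
  assumes "\<And>X. EI (\<lambda>w. hasG G (tseq w) \<or> (True \<and> tseq w = [])) X \<Longrightarrow> EI (\<lambda>w. hasG G (tseq w)) (f X)"
    "EI (\<lambda>w. hasG G (tseq w) \<or> (True \<and> tseq w = [])) X" "n > 0"
  shows "vac ((f ^^ n) X) = 0"
proof -
  have "EI (\<lambda>w. hasG G (tseq w)) ((f ^^ n) X)"
    by (rule iter_EI[where Pin = "\<lambda>w. hasG G (tseq w) \<or> (True \<and> tseq w = [])"]) (use assms in auto)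
  then show ?thesis by (rule vac_hasG)
qed

lemma fock_hd:
  assumes hA: "\<And>a b. tmom (N True) a b = (if a = 0 then 1 else 0)" and h0: "tmom (N False) 0 0 = 1"
  shows "fock_moment N p q = (if p = 0 then tmom (N False) 0 q else 0)"
proof -
  define V where "V = (if q \<ge> 0 then vpos N else vneg N)"
  define U where "U = (if p \<ge> 0 then upos N else uneg N)"
  have cV: "cong N V" and cU: "cong N U" using cong_ops by (simp_all add: V_def U_def)
  have VY: "veq N (V (Yv N e)) (Yv N (fst e + 0, snd e + (if q \<ge> 0 then 1 else -1)))" for e
  proof (cases "q \<ge> 0")
    case True
    then show ?thesis unfolding V_def using vpos_Y[of N e] by (simp add: hA lnull_def lexp_lcenter_shift)
  next
    case False
    then show ?thesis unfolding V_def using vneg_Y[of N e] by (simp add: hA lnull_def lexp_lcenter_shift)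
  qed
  have X: "veq N ((V ^^ nat \<bar>q\<bar>) xi) (Yv N (0, q))"
    using iter_Y_xi[OF cV VY h0, of "nat \<bar>q\<bar>"] by (cases "q \<ge> 0") auto
  have "fock_moment N p q = vac ((U ^^ nat \<bar>p\<bar>) ((V ^^ nat \<bar>q\<bar>) xi))"
    by (simp add: fock_unfold U_def V_def)
  also have "\<dots> = vac ((U ^^ nat \<bar>p\<bar>) (Yv N (0, q)))"
    by (rule veq_vac, rule funpow_veq[OF cU X])
  finally have F: "fock_moment N p q = vac ((U ^^ nat \<bar>p\<bar>) (Yv N (0, q)))" .
  show ?thesis
  proof (cases "p = 0")
    case True then show ?thesis using F by (simp add: vac_Yv)
  next
    case False
    have Y: "EI (\<lambda>w. hasG G (tseq w) \<or> (True \<and> tseq w = [])) (Yv N (0, q))" for G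
      using EI_Yv[of N "(0, q)"] by (rule EI_mono) simp
    show ?thesis
    proof (cases "p > 0")
      case True
      have "vac ((U ^^ nat \<bar>p\<bar>) (Yv N (0, q))) = 0"
      proof (rule kill_pow[OF _ Y])
        fix X assume "EI (\<lambda>w. hasG (GS (N True) (\<lambda>a b. 0 \<le> a)) (tseq w) \<or> (True \<and> tseq w = [])) X"
        then show "EI (\<lambda>w. hasG (GS (N True) (\<lambda>a b. 0 \<le> a)) (tseq w)) (U X)"
          unfolding U_def using True
          by (auto intro!: upos_hasG simp: GS_def lexp_lcenter_shift hA)
      qed (use False in auto)
      then show ?thesis using F False by simp
    next
      case nn: False
      have "vac ((U ^^ nat \<bar>p\<bar>) (Yv N (0, q))) = 0"
      proof (rule kill_pow[OF _ Y])
        fix X assume "EI (\<lambda>w. hasG (GS (N True) (\<lambda>a b. a \<le> 0)) (tseq w) \<or> (True \<and> tseq w = [])) X"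
        then show "EI (\<lambda>w. hasG (GS (N True) (\<lambda>a b. a \<le> 0)) (tseq w)) (U X)"
          unfolding U_def using nn False
          by (auto intro!: uneg_hasG simp: GS_def lexp_lcenter_shift hA)
      qed (use False in auto)
      then show ?thesis using F False by simp
    qed
  qed
qed


lemma kill_VU:
  assumes V: "\<And>X. EI (\<lambda>w. hasG G (tseq w) \<or> (True \<and> tseq w = [])) X \<Longrightarrow> EI (\<lambda>w. hasG G (tseq w)) (V X)"
    and U: "\<And>X. EI (\<lambda>w. hasG G (tseq w) \<or> (False \<and> tseq w = [])) X \<Longrightarrow> EI (\<lambda>w. hasG G (tseq w)) (U X)"
    and m: "m > 0"
  shows "vac ((U ^^ n) ((V ^^ m) xi)) = 0"
proof -
  have "EI (\<lambda>w. hasG G (tseq w)) ((V ^^ m) xi)"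
    by (rule iter_EI[where Pin = "\<lambda>w. hasG G (tseq w) \<or> (True \<and> tseq w = [])"])
       (use V m EI_xi in \<open>auto elim: EI_mono\<close>)
  moreover have "\<And>Y. EI (\<lambda>w. hasG G (tseq w)) Y \<Longrightarrow> EI (\<lambda>w. hasG G (tseq w)) (U Y)"
    using U by (auto elim: EI_mono)
  ultimately have "EI (\<lambda>w. hasG G (tseq w)) ((U ^^ n) ((V ^^ m) xi))"
    using funpow_inv[where I = "EI (\<lambda>w. hasG G (tseq w))" and f = U] by blast
  then show ?thesis by (rule vac_hasG)
qed

lemma fock_dh:
  assumes hA: "\<And>a b. tmom (N True) a b = (if b = 0 then 1 else 0)" and h0: "tmom (N False) 0 0 = 1"
  shows "fock_moment N p q = (if q = 0 then tmom (N False) p 0 else 0)"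
proof -
  define V where "V = (if q \<ge> 0 then vpos N else vneg N)"
  define U where "U = (if p \<ge> 0 then upos N else uneg N)"
  have cV: "cong N V" and cU: "cong N U" using cong_ops by (simp_all add: V_def U_def)
  have F: "fock_moment N p q = vac ((U ^^ nat \<bar>p\<bar>) ((V ^^ nat \<bar>q\<bar>) xi))"
    by (simp add: fock_unfold U_def V_def)
  show ?thesis
  proof (cases "q = 0")
    case True
    have UY: "veq N (U (Yv N e)) (Yv N (fst e + (if p \<ge> 0 then 1 else -1), snd e + 0))" for e
    proof (cases "p \<ge> 0")
      case True
      then show ?thesis unfolding U_def using upos_Y[of N e] by (simp add: hA lnull_def lexp_lcenter_shift)
    next
      case False
      then show ?thesis unfolding U_def using uneg_Y[of N e] by (simp add: hA lnull_def lexp_lcenter_shift)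
    qed
    have X: "veq N ((U ^^ nat \<bar>p\<bar>) xi) (Yv N (p, 0))"
      using iter_Y_xi[OF cU UY h0, of "nat \<bar>p\<bar>"] by (cases "p \<ge> 0") auto
    show ?thesis using F True veq_vac[OF X] by (simp add: vac_Yv)
  next
    case False
    show ?thesis
    proof (cases "q > 0")
      case qp: True
      have "vac ((U ^^ nat \<bar>p\<bar>) ((V ^^ nat \<bar>q\<bar>) xi)) = 0"
      proof (rule kill_VU[where G = "GS (N True) (\<lambda>a b. 0 \<le> b)"])
        fix X assume "EI (\<lambda>w. hasG (GS (N True) (\<lambda>a b. 0 \<le> b)) (tseq w) \<or> (True \<and> tseq w = [])) X"
        then show "EI (\<lambda>w. hasG (GS (N True) (\<lambda>a b. 0 \<le> b)) (tseq w)) (V X)"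
          unfolding V_def using qp by (auto intro!: vpos_hasG simp: GS_def lexp_lcenter_shift hA)
      next
        fix X assume "EI (\<lambda>w. hasG (GS (N True) (\<lambda>a b. 0 \<le> b)) (tseq w) \<or> (False \<and> tseq w = [])) X"
        then show "EI (\<lambda>w. hasG (GS (N True) (\<lambda>a b. 0 \<le> b)) (tseq w)) (U X)"
          unfolding U_def by (auto intro!: upos_hasG[where C = False] uneg_hasG[where C = False])
      qed (use False in auto)
      then show ?thesis using F False by simp
    next
      case qn: False
      have "vac ((U ^^ nat \<bar>p\<bar>) ((V ^^ nat \<bar>q\<bar>) xi)) = 0"
      proof (rule kill_VU[where G = "GS (N True) (\<lambda>a b. b \<le> 0)"])
        fix X assume "EI (\<lambda>w. hasG (GS (N True) (\<lambda>a b. b \<le> 0)) (tseq w) \<or> (True \<and> tseq w = [])) X"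
        then show "EI (\<lambda>w. hasG (GS (N True) (\<lambda>a b. b \<le> 0)) (tseq w)) (V X)"
          unfolding V_def using qn False by (auto intro!: vneg_hasG simp: GS_def lexp_lcenter_shift hA)
      next
        fix X assume "EI (\<lambda>w. hasG (GS (N True) (\<lambda>a b. b \<le> 0)) (tseq w) \<or> (False \<and> tseq w = [])) X"
        then show "EI (\<lambda>w. hasG (GS (N True) (\<lambda>a b. b \<le> 0)) (tseq w)) (U X)"
          unfolding U_def by (auto intro!: upos_hasG[where C = False] uneg_hasG[where C = False])
      qed (use False in auto)
      then show ?thesis using F False by simp
    qed
  qed
qed

lemma fock_hh:
  assumes hA: "\<And>a b. tmom (N True) a b = (if a = 0 \<and> b = 0 then 1 else 0)"
  shows "fock_moment N p q = (if p = 0 \<and> q = 0 then 1 else 0)"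
proof -
  define V where "V = (if q \<ge> 0 then vpos N else vneg N)"
  define U where "U = (if p \<ge> 0 then upos N else uneg N)"
  have F: "fock_moment N p q = vac ((U ^^ nat \<bar>p\<bar>) ((V ^^ nat \<bar>q\<bar>) xi))"
    by (simp add: fock_unfold U_def V_def)
  show ?thesis
  proof (cases "q = 0")
    case True
    show ?thesis
    proof (cases "p = 0")
      case True
      then show ?thesis using F \<open>q = 0\<close> by (simp add: xi_def vac_def)
    next
      case False
      have Y: "EI (\<lambda>w. hasG G (tseq w) \<or> (True \<and> tseq w = [])) xi" for G
        using EI_xi by (rule EI_mono) simp
      show ?thesis
      proof (cases "p > 0")
        case pp: True
        have "vac ((U ^^ nat \<bar>p\<bar>) xi) = 0"
        proof (rule kill_pow[OF _ Y])
          fix X assume "EI (\<lambda>w. hasG (GS (N True) (\<lambda>a b. 0 \<le> a)) (tseq w) \<or> (True \<and> tseq w = [])) X"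
          then show "EI (\<lambda>w. hasG (GS (N True) (\<lambda>a b. 0 \<le> a)) (tseq w)) (U X)"
            unfolding U_def using pp by (auto intro!: upos_hasG simp: GS_def lexp_lcenter_shift hA)
        qed (use False in auto)
        then show ?thesis using F False \<open>q = 0\<close> by simp
      next
        case nn: False
        have "vac ((U ^^ nat \<bar>p\<bar>) xi) = 0"
        proof (rule kill_pow[OF _ Y])
          fix X assume "EI (\<lambda>w. hasG (GS (N True) (\<lambda>a b. a \<le> 0)) (tseq w) \<or> (True \<and> tseq w = [])) X"
          then show "EI (\<lambda>w. hasG (GS (N True) (\<lambda>a b. a \<le> 0)) (tseq w)) (U X)"
            unfolding U_def using nn False by (auto intro!: uneg_hasG simp: GS_def lexp_lcenter_shift hA)
        qed (use False in auto)
        then show ?thesis using F False \<open>q = 0\<close> by simp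
      qed
    qed
  next
    case False
    show ?thesis
    proof (cases "q > 0")
      case qp: True
      have "vac ((U ^^ nat \<bar>p\<bar>) ((V ^^ nat \<bar>q\<bar>) xi)) = 0"
      proof (rule kill_VU[where G = "GS (N True) (\<lambda>a b. 0 \<le> b)"])
        fix X assume "EI (\<lambda>w. hasG (GS (N True) (\<lambda>a b. 0 \<le> b)) (tseq w) \<or> (True \<and> tseq w = [])) X"
        then show "EI (\<lambda>w. hasG (GS (N True) (\<lambda>a b. 0 \<le> b)) (tseq w)) (V X)"
          unfolding V_def using qp by (auto intro!: vpos_hasG simp: GS_def lexp_lcenter_shift hA)
      next
        fix X assume "EI (\<lambda>w. hasG (GS (N True) (\<lambda>a b. 0 \<le> b)) (tseq w) \<or> (False \<and> tseq w = [])) X"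
        then show "EI (\<lambda>w. hasG (GS (N True) (\<lambda>a b. 0 \<le> b)) (tseq w)) (U X)"
          unfolding U_def by (auto intro!: upos_hasG[where C = False] uneg_hasG[where C = False])
      qed (use False in auto)
      then show ?thesis using F False by simp
    next
      case qn: False
      have "vac ((U ^^ nat \<bar>p\<bar>) ((V ^^ nat \<bar>q\<bar>) xi)) = 0"
      proof (rule kill_VU[where G = "GS (N True) (\<lambda>a b. b \<le> 0)"])
        fix X assume "EI (\<lambda>w. hasG (GS (N True) (\<lambda>a b. b \<le> 0)) (tseq w) \<or> (True \<and> tseq w = [])) X"
        then show "EI (\<lambda>w. hasG (GS (N True) (\<lambda>a b. b \<le> 0)) (tseq w)) (V X)"
          unfolding V_def using qn False by (auto intro!: vneg_hasG simp: GS_def lexp_lcenter_shift hA)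
      next
        fix X assume "EI (\<lambda>w. hasG (GS (N True) (\<lambda>a b. b \<le> 0)) (tseq w) \<or> (False \<and> tseq w = [])) X"
        then show "EI (\<lambda>w. hasG (GS (N True) (\<lambda>a b. b \<le> 0)) (tseq w)) (U X)"
          unfolding U_def by (auto intro!: upos_hasG[where C = False] uneg_hasG[where C = False])
      qed (use False in auto)
      then show ?thesis using F False by simp
    qed
  qed
qed

definition linop :: "(fvec \<Rightarrow> fvec) \<Rightarrow> bool" where
  "linop F \<longleftrightarrow> (\<forall>X. F X = vapply (\<lambda>w. F [(1, w)]) X)"

lemma vapply_single1: "vapply op [(1, w)] = op w"
  by (simp add: vapply_def)

lemma linop_vapply: "linop (vapply op)"
  unfolding linop_def vapply_single1 by simp

lemma linop_comp: assumes "linop F1" "linop F2" shows "linop (F1 \<circ> F2)"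
proof -
  have h1: "\<And>X. F1 X = vapply (\<lambda>w. F1 [(1, w)]) X" using assms(1) unfolding linop_def by blast
  have h2: "\<And>X. F2 X = vapply (\<lambda>w. F2 [(1, w)]) X" using assms(2) unfolding linop_def by blast
  have "F1 (F2 X) = vapply (\<lambda>w. F1 (F2 [(1, w)])) X" for X
  proof -
    have "F1 (F2 X) = vapply (\<lambda>w. F1 [(1, w)]) (vapply (\<lambda>w. F2 [(1, w)]) X)"
    proof -
      have e2: "F2 X = vapply (\<lambda>w. F2 [(1, w)]) X" by (rule h2)
      have e1: "F1 (F2 X) = vapply (\<lambda>w. F1 [(1, w)]) (F2 X)" by (rule h1)
      show ?thesis unfolding e1 by (subst e2) (rule refl)
    qed
    also have "\<dots> = vapply (vcomp (\<lambda>w. F1 [(1, w)]) (\<lambda>w. F2 [(1, w)])) X" by (rule vapply_vapply)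
    also have "vcomp (\<lambda>w. F1 [(1, w)]) (\<lambda>w. F2 [(1, w)]) = (\<lambda>w. F1 (F2 [(1, w)]))"
      unfolding vcomp_def using h1 by (intro ext) (rule sym, rule h1)
    finally show ?thesis .
  qed
  then show ?thesis unfolding linop_def comp_def by blast
qed

lemma linop_ops: "linop (upos N)" "linop (uneg N)" "linop (vpos N)" "linop (vneg N)"
  by (simp_all add: upos_def uneg_def vpos_def vneg_def linop_comp linop_vapply)

lemma linop_funpow: "linop F \<Longrightarrow> linop (F ^^ n)"
proof (induction n)
  case 0
  have "X = vapply (\<lambda>w. [(1, w)]) X" for X by (induction X) (auto simp: vapply_def)
  then show ?case unfolding linop_def by simp
next
  case (Suc n) then show ?case using linop_comp[of F "F ^^ n"] by (simp only: funpow.simps(2))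
qed

lemma linop_EI: assumes "linop F" "EI P X" "\<And>w. P w \<Longrightarrow> EI P' (F [(1, w)])" shows "EI P' (F X)"
proof -
  have "F X = vapply (\<lambda>w. F [(1, w)]) X" using assms(1) unfolding linop_def by blast
  then show ?thesis using EI_vapply[OF assms(2), where op = "\<lambda>w. F [(1, w)]" and P' = P'] assms(3) by simp
qed

lemma linop_vac: assumes "linop F" shows "vac (F X) = lin (\<lambda>w. vac (F [(1, w)])) X"
proof -
  have "F X = vapply (\<lambda>w. F [(1, w)]) X" using assms(1) unfolding linop_def by blast
  then show ?thesis unfolding vac_lin using lin_vapply by metis
qed

lemma lin_cong_EI: "EI P X \<Longrightarrow> (\<And>w. P w \<Longrightarrow> h w = h' w) \<Longrightarrow> lin h X = lin h' X"
  unfolding EI_def lin_def by (induction X) auto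

lemma lin_scal: "lin (\<lambda>w. c * h w) X = c * lin h X"
  by (induction X) (auto simp: algebra_simps)

lemma xi_1: "[(1, [])] = xi" by (simp add: xi_def)

lemma lam_append_gen: "x \<noteq> [] \<Longrightarrow> lam_word N i k (x @ s) = map (\<lambda>t. (fst t, snd t @ s)) (lam_word N i k x)"
proof -
  assume "x \<noteq> []"
  then obtain a r where x: "x = a # r" by (cases x) auto
  show ?thesis unfolding x using lam_Cons_gen[of N i k a "r @ s"] lam_Cons_gen[of N i k a r] by simp
qed

lemma rho_prefix_gen: "w \<noteq> [] \<Longrightarrow> rho_word N i k (p @ w) = map (\<lambda>t. (fst t, p @ snd t)) (rho_word N i k w)"
  unfolding rho_word_def by (simp add: lam_append_gen)

definition Jw :: "m2 \<Rightarrow> (int \<Rightarrow> int \<Rightarrow> bool) \<Rightarrow> (int \<Rightarrow> int \<Rightarrow> bool) \<Rightarrow> lpoly list \<Rightarrow> bool" where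
  "Jw A Sh Sl s \<longleftrightarrow> s \<noteq> [] \<and> GS A Sh (hd s) \<and> GS A Sl (last s)"
definition Jf :: "m2 \<Rightarrow> (int \<Rightarrow> int \<Rightarrow> bool) \<Rightarrow> lpoly list \<Rightarrow> bool" where
  "Jf A Sh s \<longleftrightarrow> s \<noteq> [] \<and> GS A Sh (hd s)"
definition Jl :: "m2 \<Rightarrow> (int \<Rightarrow> int \<Rightarrow> bool) \<Rightarrow> lpoly list \<Rightarrow> bool" where
  "Jl A Sl s \<longleftrightarrow> s \<noteq> [] \<and> GS A Sl (last s)"

lemma GS_null_closed:
  assumes "GS A Sh x" "GS A Sl x" "\<And>a b. Sh a b \<or> Sl a b"
  shows "lnull A (lcenter A (lshift k x))"
proof -
  have n: "lexp A (lshift e x) = 0" for e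
    using assms unfolding GS_def by (cases e) metis
  show ?thesis unfolding lnull_def lexp_lcenter_shift using n by simp
qed

lemma lnull_GS: "lnull A x \<Longrightarrow> GS A S x"
  unfolding lnull_def GS_def by auto

lemma EI_lamT_J:
  assumes "Jw (N True) Sh Sl (tseq w)" "Sh (fst k) (snd k)" "\<And>a b. Sh a b \<Longrightarrow> Sh (a + fst k) (b + snd k)"
    "\<And>a b. Sh a b \<or> Sl a b" "GS (N True) Sh (lcenter (N True) [(k, 1)])"
  shows "EI (\<lambda>w. Jw (N True) Sh Sl (tseq w)) (lam_word N True k w)"
proof (rule EI_lamT'[where Qi = "Jw (N True) Sh Sl", OF assms(1)])
  fix x s assume "Jw (N True) Sh Sl (x # s)"
  then show "lexp (N True) (lshift k x) = 0 \<or> Jw (N True) Sh Sl s"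
    using GS_ann[of "N True" Sh x k] assms(2) unfolding Jw_def by auto
next
  fix x s assume J: "Jw (N True) Sh Sl (x # s)"
  have h: "GS (N True) Sh (lcenter (N True) (lshift k x))"
    using J GS_closed[of "N True" Sh x k] assms(2,3) unfolding Jw_def by auto
  show "Jw (N True) Sh Sl (lcenter (N True) (lshift k x) # s)"
  proof (cases "s = []")
    case True
    then have "GS (N True) Sl (lcenter (N True) (lshift k x))"
      using J GS_null_closed[of "N True" Sh x Sl k] assms(4) lnull_GS unfolding Jw_def by auto
    then show ?thesis using h True unfolding Jw_def by simp
  next
    case False
    then show ?thesis using h J unfolding Jw_def by simp
  qed
next
  fix s assume "Jw (N True) Sh Sl s"
  then show "(lexp (N True) [(k, 1)] = 0 \<or> Jw (N True) Sh Sl s) \<and> Jw (N True) Sh Sl (lcenter (N True) [(k, 1)] # s)"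
    using assms(5) unfolding Jw_def by auto
qed

lemma EI_rhoT_J:
  assumes "Jw (N True) Sh Sl (tseq w)" "Sl (fst k) (snd k)" "\<And>a b. Sl a b \<Longrightarrow> Sl (a + fst k) (b + snd k)"
    "\<And>a b. Sh a b \<or> Sl a b" "GS (N True) Sl (lcenter (N True) [(k, 1)])"
  shows "EI (\<lambda>w. Jw (N True) Sh Sl (tseq w)) (rho_word N True k w)"
proof (rule EI_rhoT'[where Qi = "Jw (N True) Sh Sl", OF assms(1)])
  fix x s assume "Jw (N True) Sh Sl (s @ [x])"
  then show "lexp (N True) (lshift k x) = 0 \<or> Jw (N True) Sh Sl s"
    using GS_ann[of "N True" Sl x k] assms(2) unfolding Jw_def by auto
next
  fix x s assume J: "Jw (N True) Sh Sl (s @ [x])"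
  have h: "GS (N True) Sl (lcenter (N True) (lshift k x))"
    using J GS_closed[of "N True" Sl x k] assms(2,3) unfolding Jw_def by auto
  show "Jw (N True) Sh Sl (s @ [lcenter (N True) (lshift k x)])"
  proof (cases "s = []")
    case True
    then have "GS (N True) Sh (lcenter (N True) (lshift k x))"
      using J GS_null_closed[of "N True" Sh x Sl k] assms(4) lnull_GS unfolding Jw_def by auto
    then show ?thesis using h True unfolding Jw_def by simp
  next
    case False
    then show ?thesis using h J unfolding Jw_def by simp
  qed
next
  fix s assume "Jw (N True) Sh Sl s"
  then show "(lexp (N True) [(k, 1)] = 0 \<or> Jw (N True) Sh Sl s) \<and> Jw (N True) Sh Sl (s @ [lcenter (N True) [(k, 1)]])"
    using assms(5) unfolding Jw_def by auto
qed

lemma EI_lamT_Jf: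
  assumes "tseq w = [] \<or> Jf (N True) Sh (tseq w)" "Sh (fst k) (snd k)" "\<And>a b. Sh a b \<Longrightarrow> Sh (a + fst k) (b + snd k)"
    "lexp (N True) [(k, 1)] = 0" "GS (N True) Sh (lcenter (N True) [(k, 1)])"
  shows "EI (\<lambda>w. Jf (N True) Sh (tseq w)) (lam_word N True k w)"
proof (rule EI_lamT'[where Qi = "\<lambda>s. s = [] \<or> Jf (N True) Sh s", OF assms(1)])
  fix x s assume "x # s = [] \<or> Jf (N True) Sh (x # s)"
  then show "lexp (N True) (lshift k x) = 0 \<or> Jf (N True) Sh s"
    using GS_ann[of "N True" Sh x k] assms(2) unfolding Jf_def by auto
next
  fix x s assume "x # s = [] \<or> Jf (N True) Sh (x # s)"
  then show "Jf (N True) Sh (lcenter (N True) (lshift k x) # s)"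
    using GS_closed[of "N True" Sh x k] assms(2,3) unfolding Jf_def by auto
next
  fix s assume "s = [] \<or> Jf (N True) Sh s"
  then show "(lexp (N True) [(k, 1)] = 0 \<or> Jf (N True) Sh s) \<and> Jf (N True) Sh (lcenter (N True) [(k, 1)] # s)"
    using assms(4,5) unfolding Jf_def by auto
qed

lemma EI_rhoT_Jl:
  assumes "tseq w = [] \<or> Jl (N True) Sl (tseq w)" "Sl (fst k) (snd k)" "\<And>a b. Sl a b \<Longrightarrow> Sl (a + fst k) (b + snd k)"
    "lexp (N True) [(k, 1)] = 0" "GS (N True) Sl (lcenter (N True) [(k, 1)])"
  shows "EI (\<lambda>w. Jl (N True) Sl (tseq w)) (rho_word N True k w)"
proof (rule EI_rhoT'[where Qi = "\<lambda>s. s = [] \<or> Jl (N True) Sl s", OF assms(1)])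
  fix x s assume "s @ [x] = [] \<or> Jl (N True) Sl (s @ [x])"
  then show "lexp (N True) (lshift k x) = 0 \<or> Jl (N True) Sl s"
    using GS_ann[of "N True" Sl x k] assms(2) unfolding Jl_def by auto
next
  fix x s assume "s @ [x] = [] \<or> Jl (N True) Sl (s @ [x])"
  then show "Jl (N True) Sl (s @ [lcenter (N True) (lshift k x)])"
    using GS_closed[of "N True" Sl x k] assms(2,3) unfolding Jl_def by auto
next
  fix s assume "s = [] \<or> Jl (N True) Sl s"
  then show "(lexp (N True) [(k, 1)] = 0 \<or> Jl (N True) Sl s) \<and> Jl (N True) Sl (s @ [lcenter (N True) [(k, 1)]])"
    using assms(4,5) unfolding Jl_def by auto
qed

definition Sp :: "int \<Rightarrow> int \<Rightarrow> bool" where "Sp a b \<longleftrightarrow> b \<le> a"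
definition Sm :: "int \<Rightarrow> int \<Rightarrow> bool" where "Sm a b \<longleftrightarrow> a \<le> b"

context
  fixes N :: "bool \<Rightarrow> m2"
  assumes hA: "\<And>a b. tmom (N True) a b = (if a = b then 1 else 0)"
begin

lemma P_GS:
  "GS (N True) Sp (lcenter (N True) [((1, 0), 1)])"
  "GS (N True) Sm (lcenter (N True) [((0, 1), 1)])"
  "GS (N True) Sm (lcenter (N True) [((-1, 0), 1)])"
  "GS (N True) Sp (lcenter (N True) [((0, -1), 1)])"
  by (auto simp: GS_def lexp_lcenter_shift hA Sp_def Sm_def)

lemma P_null1: "lnull (N True) (lcenter (N True) (lshift (1, 0) (lcenter (N True) [((0, 1), 1)])))"
  by (auto simp: lnull_def lexp_lcenter_shift hA)

lemma uv_xi_vac: "vac (upos N (vpos N xi)) = tmom (N False) 1 1"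
  unfolding upos_def vpos_def xi_def
  by (simp add: vapply_def rho_Nil rho_single rho_two hA lexp_lcenter_shift vac_def)

lemma uv_xi_EI: "EI (\<lambda>w. w = [] \<or> Jw (N True) Sp Sm (tseq w)) (upos N (vpos N xi))"
  unfolding upos_def vpos_def xi_def
  by (simp add: vapply_def rho_Nil rho_single rho_two hA lexp_lcenter_shift Jw_def P_GS lnull_GS[OF P_null1])

lemma P_null2: "lnull (N True) (lcenter (N True) (lshift (-1, 0) (lcenter (N True) [((0, -1), 1)])))"
  by (auto simp: lnull_def lexp_lcenter_shift hA)

lemma uv_xi_EI': "EI (\<lambda>w. tseq w = [] \<or> Jw (N True) Sm Sp (tseq w)) (uneg N (vneg N xi))"
  unfolding uneg_def vneg_def xi_def
  by (simp add: vapply_def rho_Nil rho_single rho_two hA lexp_lcenter_shift Jw_def P_GS lnull_GS[OF P_null2])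

lemma uv_xi_vac': "vac (uneg N (vneg N xi)) = tmom (N False) (-1) (-1)"
  unfolding uneg_def vneg_def xi_def
  by (simp add: vapply_def rho_Nil rho_single rho_two hA lexp_lcenter_shift vac_def)

end

lemma Sp_Sm_all: "Sp a b \<or> Sm a b" "Sm a b \<or> Sp a b" by (auto simp: Sp_def Sm_def)

lemma S_facts: "Sp 1 0" "Sp 0 (-1)" "Sm 0 1" "Sm (-1) 0"
  "Sp a b \<Longrightarrow> Sp (a + 1) b" "Sp a b \<Longrightarrow> Sp a (b - 1)" "Sp a b \<Longrightarrow> Sp a (b + - 1)"
  "Sm a b \<Longrightarrow> Sm a (b + 1)" "Sm a b \<Longrightarrow> Sm (a - 1) b" "Sm a b \<Longrightarrow> Sm (a + - 1) b"
  by (auto simp: Sp_def Sm_def)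


lemma Jw_ne: "Jw A Sh Sl (tseq w) \<Longrightarrow> w \<noteq> []" by (auto simp: Jw_def)

context
  fixes N :: "bool \<Rightarrow> m2"
  assumes hA: "\<And>a b. tmom (N True) a b = (if a = b then 1 else 0)"
begin

lemma A_units: "lexp (N True) [((1, 0), 1)] = 0" "lexp (N True) [((-1, 0), 1)] = 0"
   "lexp (N True) [((0, 1), 1)] = 0" "lexp (N True) [((0, -1), 1)] = 0"
  by (simp_all add: hA)

lemma J_pos_ops:
  assumes "EI (\<lambda>w. Jw (N True) Sp Sm (tseq w)) X"
  shows "EI (\<lambda>w. Jw (N True) Sp Sm (tseq w)) (upos N X)" "EI (\<lambda>w. Jw (N True) Sp Sm (tseq w)) (vpos N X)"
proof -
  show "EI (\<lambda>w. Jw (N True) Sp Sm (tseq w)) (upos N X)"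
    unfolding upos_def comp_def
    by (rule EI_vapply[OF EI_lamF_vec[OF assms]], rule EI_lamT_J)
       (auto simp: S_facts Sp_Sm_all P_GS[of N, OF hA])
  show "EI (\<lambda>w. Jw (N True) Sp Sm (tseq w)) (vpos N X)"
    unfolding vpos_def comp_def
    by (rule EI_vapply[OF EI_rhoF_vec[OF assms]], rule EI_rhoT_J)
       (auto simp: S_facts Sp_Sm_all P_GS[of N, OF hA])
qed

lemma J_neg_ops:
  assumes "EI (\<lambda>w. Jw (N True) Sm Sp (tseq w)) X"
  shows "EI (\<lambda>w. Jw (N True) Sm Sp (tseq w)) (uneg N X)" "EI (\<lambda>w. Jw (N True) Sm Sp (tseq w)) (vneg N X)"
proof -
  show "EI (\<lambda>w. Jw (N True) Sm Sp (tseq w)) (uneg N X)"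
    unfolding uneg_def comp_def
    by (rule EI_lamF_vec, rule EI_vapply[OF assms], rule EI_lamT_J)
       (auto simp: S_facts Sp_Sm_all P_GS[of N, OF hA])
  show "EI (\<lambda>w. Jw (N True) Sm Sp (tseq w)) (vneg N X)"
    unfolding vneg_def comp_def
    by (rule EI_rhoF_vec, rule EI_vapply[OF assms], rule EI_rhoT_J)
       (auto simp: S_facts Sp_Sm_all P_GS[of N, OF hA])
qed

lemma uv_step_pos:
  assumes "EI (\<lambda>w. w = [] \<or> Jw (N True) Sp Sm (tseq w)) X"
  shows "vac (upos N (vpos N X)) = tmom (N False) 1 1 * vac X"
    "EI (\<lambda>w. w = [] \<or> Jw (N True) Sp Sm (tseq w)) (upos N (vpos N X))"
proof -
  have L: "linop (upos N \<circ> vpos N)" by (simp add: linop_comp linop_ops)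
  have J: "EI (\<lambda>w. Jw (N True) Sp Sm (tseq w)) (upos N (vpos N [(1, w)]))" if "Jw (N True) Sp Sm (tseq w)" for w
    using that by (intro J_pos_ops) simp_all
  have "vac (upos N (vpos N X)) = lin (\<lambda>w. vac (upos N (vpos N [(1, w)]))) X"
    using linop_vac[OF L, of X] by simp
  also have "\<dots> = lin (\<lambda>w. tmom (N False) 1 1 * vacw w) X"
  proof (rule lin_cong_EI[OF assms])
    fix w assume "w = [] \<or> Jw (N True) Sp Sm (tseq w)"
    then show "vac (upos N (vpos N [(1, w)])) = tmom (N False) 1 1 * vacw w"
    proof
      assume "w = []" then show ?thesis using uv_xi_vac[of N, OF hA] by (simp add: xi_def vacw_def)
    next
      assume w: "Jw (N True) Sp Sm (tseq w)"
      have "vac (upos N (vpos N [(1, w)])) = 0"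
        by (rule vac_EI_zero, rule EI_mono[OF J[OF w]]) (rule Jw_ne)
      then show ?thesis using Jw_ne[OF w] by (simp add: vacw_def)
    qed
  qed
  also have "\<dots> = tmom (N False) 1 1 * vac X" by (simp add: lin_scal vac_lin)
  finally show "vac (upos N (vpos N X)) = tmom (N False) 1 1 * vac X" .
  show "EI (\<lambda>w. w = [] \<or> Jw (N True) Sp Sm (tseq w)) (upos N (vpos N X))"
  proof -
    have "EI (\<lambda>w. w = [] \<or> Jw (N True) Sp Sm (tseq w)) ((upos N \<circ> vpos N) X)"
    proof (rule linop_EI[OF L assms])
      fix w assume "w = [] \<or> Jw (N True) Sp Sm (tseq w)"
      then show "EI (\<lambda>w. w = [] \<or> Jw (N True) Sp Sm (tseq w)) ((upos N \<circ> vpos N) [(1, w)])"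
      proof
        assume "w = []" then show ?thesis using uv_xi_EI[of N, OF hA] by (simp add: xi_def)
      next
        assume w: "Jw (N True) Sp Sm (tseq w)"
        show ?thesis using J[OF w] by (auto elim: EI_mono)
      qed
    qed
    then show ?thesis by simp
  qed
qed

lemma uv_pow_pos:
  "vac (((upos N \<circ> vpos N) ^^ n) xi) = tmom (N False) 1 1 ^ n \<and>
   EI (\<lambda>w. w = [] \<or> Jw (N True) Sp Sm (tseq w)) (((upos N \<circ> vpos N) ^^ n) xi)"
proof (induction n)
  case 0 then show ?case by (simp add: xi_def vac_def)
next
  case (Suc n)
  define Y where "Y = ((upos N \<circ> vpos N) ^^ n) xi"
  have eq: "((upos N \<circ> vpos N) ^^ Suc n) xi = upos N (vpos N Y)"
    unfolding Y_def by (simp only: funpow.simps(2) comp_apply)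
  have IH: "vac Y = tmom (N False) 1 1 ^ n" "EI (\<lambda>w. w = [] \<or> Jw (N True) Sp Sm (tseq w)) Y"
    using Suc.IH unfolding Y_def by blast+
  show ?case unfolding eq using uv_step_pos[OF IH(2)] IH(1) by simp
qed

end

context
  fixes N :: "bool \<Rightarrow> m2"
  assumes hA: "\<And>a b. tmom (N True) a b = (if a = b then 1 else 0)"
begin

lemma neg_tfree:
  assumes "tseq w = []" "w \<noteq> []"
  shows "EI (\<lambda>w. Jw (N True) Sm Sp (tseq w)) (uneg N (vneg N [(1, w)]))"
proof -
  define cT where "cT = lcenter (N True) [((0, -1), 1)]"
  obtain y0 r0 where w: "w = (False, y0) # r0"
    using assms by (cases w) (auto, metis (full_types) tseq_simps(2) list.distinct(1) prod.collapse)
  have r0: "tseq r0 = []" using assms w by simp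
  obtain r b where rb: "w = r @ [b]" using assms(2) by (metis rev_exhaust)
  have b: "\<not> fst b" using assms rb by (cases b) (auto split: if_splits)
  define P1 where "P1 = (\<lambda>w'. \<exists>r. w' = (False, y0) # r \<and> tseq r = [cT])"
  have s1: "EI P1 (vapply (rho_word N True (0, -1)) [(1, w)])"
  proof -
    obtain yl where bl: "b = (False, yl)" using b by (cases b) auto
    have "rho_word N True (0, -1) w = [(lexp (N True) [((0, -1), 1)], w), (1, w @ [(True, cT)])]"
      unfolding rb rho_snoc_gen bl by (simp add: rho_single cT_def)
    moreover have "P1 (w @ [(True, cT)])" unfolding P1_def using w r0 by simp
    ultimately show ?thesis by (simp add: vapply_single1 hA)
  qed
  have s2: "EI P1 (vapply (rho_word N False (0, -1)) (vapply (rho_word N True (0, -1)) [(1, w)]))"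
  proof (rule EI_vapply[OF s1])
    fix w' assume "P1 w'"
    then obtain r where r: "w' = (False, y0) # r" "tseq r = [cT]" unfolding P1_def by blast
    have rne: "r \<noteq> []" using r by auto
    have e: "rho_word N False (0, -1) w' = map (\<lambda>t. (fst t, [(False, y0)] @ snd t)) (rho_word N False (0, -1) r)"
      using rho_prefix_gen[OF rne, of N False "(0, -1)" "[(False, y0)]"] r by simp
    have "EI (\<lambda>w. tseq w = [cT]) (rho_word N False (0, -1) r)"
      using EI_rhoF'[of "\<lambda>s. s = [cT]"] r by simp
    then show "EI P1 (rho_word N False (0, -1) w')" unfolding e P1_def EI_def by auto
  qed
  have s3: "EI (\<lambda>w. Jw (N True) Sm Sp (tseq w)) (vapply (lam_word N True (-1, 0)) (vapply (rho_word N False (0, -1)) (vapply (rho_word N True (0, -1)) [(1, w)])))"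
  proof (rule EI_vapply[OF s2])
    fix w' assume "P1 w'"
    then obtain r where r: "w' = (False, y0) # r" "tseq r = [cT]" unfolding P1_def by blast
    show "EI (\<lambda>w. Jw (N True) Sm Sp (tseq w)) (lam_word N True (-1, 0) w')"
      using r P_GS[of N, OF hA] by (simp add: hA Jw_def cT_def)
  qed
  show ?thesis unfolding uneg_def vneg_def comp_def
    by (rule EI_lamF_vec[OF s3])
qed

lemma uv_step_neg:
  assumes "EI (\<lambda>w. tseq w = [] \<or> Jw (N True) Sm Sp (tseq w)) X"
  shows "vac (uneg N (vneg N X)) = tmom (N False) (-1) (-1) * vac X"
    "EI (\<lambda>w. tseq w = [] \<or> Jw (N True) Sm Sp (tseq w)) (uneg N (vneg N X))"
proof -
  have L: "linop (uneg N \<circ> vneg N)" by (simp add: linop_comp linop_ops)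
  have J: "EI (\<lambda>w. Jw (N True) Sm Sp (tseq w)) (uneg N (vneg N [(1, w)]))" if "w \<noteq> []" "tseq w = [] \<or> Jw (N True) Sm Sp (tseq w)" for w
    using that(2)
  proof
    assume "tseq w = []" then show ?thesis using neg_tfree that(1) by blast
  next
    assume "Jw (N True) Sm Sp (tseq w)" then show ?thesis by (intro J_neg_ops[of N, OF hA]) simp_all
  qed
  have "vac (uneg N (vneg N X)) = lin (\<lambda>w. vac (uneg N (vneg N [(1, w)]))) X"
    using linop_vac[OF L, of X] by simp
  also have "\<dots> = lin (\<lambda>w. tmom (N False) (-1) (-1) * vacw w) X"
  proof (rule lin_cong_EI[OF assms])
    fix w assume w: "tseq w = [] \<or> Jw (N True) Sm Sp (tseq w)"
    show "vac (uneg N (vneg N [(1, w)])) = tmom (N False) (-1) (-1) * vacw w"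
    proof (cases "w = []")
      case True then show ?thesis using uv_xi_vac'[of N, OF hA] by (simp add: xi_def vacw_def)
    next
      case False
      have "vac (uneg N (vneg N [(1, w)])) = 0"
        by (rule vac_EI_zero, rule EI_mono[OF J[OF False w]]) (rule Jw_ne)
      then show ?thesis using False by (simp add: vacw_def)
    qed
  qed
  also have "\<dots> = tmom (N False) (-1) (-1) * vac X" by (simp add: lin_scal vac_lin)
  finally show "vac (uneg N (vneg N X)) = tmom (N False) (-1) (-1) * vac X" .
  have "EI (\<lambda>w. tseq w = [] \<or> Jw (N True) Sm Sp (tseq w)) ((uneg N \<circ> vneg N) X)"
  proof (rule linop_EI[OF L assms])
    fix w assume w: "tseq w = [] \<or> Jw (N True) Sm Sp (tseq w)"
    show "EI (\<lambda>w. tseq w = [] \<or> Jw (N True) Sm Sp (tseq w)) ((uneg N \<circ> vneg N) [(1, w)])"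
    proof (cases "w = []")
      case True then show ?thesis using uv_xi_EI'[of N, OF hA] by (simp add: xi_def)
    next
      case False
      show ?thesis using J[OF False w] by (auto elim: EI_mono)
    qed
  qed
  then show "EI (\<lambda>w. tseq w = [] \<or> Jw (N True) Sm Sp (tseq w)) (uneg N (vneg N X))" by simp
qed

lemma uv_pow_neg:
  "vac (((uneg N \<circ> vneg N) ^^ n) xi) = tmom (N False) (-1) (-1) ^ n \<and>
   EI (\<lambda>w. tseq w = [] \<or> Jw (N True) Sm Sp (tseq w)) (((uneg N \<circ> vneg N) ^^ n) xi)"
proof (induction n)
  case 0 then show ?case by (simp add: xi_def vac_def)
next
  case (Suc n)
  define Y where "Y = ((uneg N \<circ> vneg N) ^^ n) xi"
  have eq: "((uneg N \<circ> vneg N) ^^ Suc n) xi = uneg N (vneg N Y)"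
    unfolding Y_def by (simp only: funpow.simps(2) comp_apply)
  have IH: "vac Y = tmom (N False) (-1) (-1) ^ n" "EI (\<lambda>w. tseq w = [] \<or> Jw (N True) Sm Sp (tseq w)) Y"
    using Suc.IH unfolding Y_def by blast+
  show ?case unfolding eq using uv_step_neg[OF IH(2)] IH(1) by simp
qed

lemma upos_Jf: "EI (\<lambda>w. tseq w = [] \<or> Jf (N True) Sp (tseq w)) X \<Longrightarrow> EI (\<lambda>w. Jf (N True) Sp (tseq w)) (upos N X)"
  unfolding upos_def comp_def
  by (rule EI_vapply[OF EI_lamF_vec[where Q = "\<lambda>s. s = [] \<or> Jf (N True) Sp s"]], assumption, rule EI_lamT_Jf)
     (auto simp: S_facts hA P_GS[of N, OF hA])

end

lemma kill_J:
  assumes "\<And>X. EI (\<lambda>w. tseq w = [] \<or> Q (tseq w)) X \<Longrightarrow> EI (\<lambda>w. Q (tseq w)) (f X)"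
    "\<And>s. Q s \<Longrightarrow> s \<noteq> []" "EI (\<lambda>w. tseq w = [] \<or> Q (tseq w)) X" "n > 0"
  shows "vac ((f ^^ n) X) = 0"
proof -
  have "EI (\<lambda>w. Q (tseq w)) ((f ^^ n) X)"
    by (rule iter_EI[where Pin = "\<lambda>w. tseq w = [] \<or> Q (tseq w)"]) (use assms in auto)
  then have "EI (\<lambda>w. w \<noteq> []) ((f ^^ n) X)" by (rule EI_mono) (use assms(2) in force)
  then show ?thesis by (rule vac_EI_zero)
qed

lemma funpow_split: "a \<le> b \<Longrightarrow> (f ^^ b) x = (f ^^ (b - a)) ((f ^^ a) x)"
  by (metis funpow_add comp_apply le_add_diff_inverse2)

lemma Jf_ne: "Jf A S s \<Longrightarrow> s \<noteq> []" and Jl_ne: "Jl A S s \<Longrightarrow> s \<noteq> []"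
  by (auto simp: Jf_def Jl_def)

context
  fixes N :: "bool \<Rightarrow> m2"
  assumes hA: "\<And>a b. tmom (N True) a b = (if a = b then 1 else 0)"
begin

lemma vpos_Jl: "EI (\<lambda>w. tseq w = [] \<or> Jl (N True) Sm (tseq w)) X \<Longrightarrow> EI (\<lambda>w. Jl (N True) Sm (tseq w)) (vpos N X)"
  unfolding vpos_def comp_def
  by (rule EI_vapply[OF EI_rhoF_vec[where Q = "\<lambda>s. s = [] \<or> Jl (N True) Sm s"]], assumption, rule EI_rhoT_Jl)
     (auto simp: S_facts hA P_GS[of N, OF hA])

lemma uneg_Jf: "EI (\<lambda>w. tseq w = [] \<or> Jf (N True) Sm (tseq w)) X \<Longrightarrow> EI (\<lambda>w. Jf (N True) Sm (tseq w)) (uneg N X)"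
  unfolding uneg_def comp_def
  by (rule EI_lamF_vec, rule EI_vapply, assumption, rule EI_lamT_Jf)
     (auto simp: S_facts hA P_GS[of N, OF hA])

lemma vneg_Jl: "EI (\<lambda>w. tseq w = [] \<or> Jl (N True) Sp (tseq w)) X \<Longrightarrow> EI (\<lambda>w. Jl (N True) Sp (tseq w)) (vneg N X)"
  unfolding vneg_def comp_def
  by (rule EI_rhoF_vec, rule EI_vapply, assumption, rule EI_rhoT_Jl)
     (auto simp: S_facts hA P_GS[of N, OF hA])

lemma fock_P:
  "fock_moment N p q = (if p = q then (if 0 \<le> p then tmom (N False) 1 1 ^ nat p else tmom (N False) (-1) (-1) ^ nat (-p)) else 0)"
proof -
  define V where "V = (if q \<ge> 0 then vpos N else vneg N)"
  define U where "U = (if p \<ge> 0 then upos N else uneg N)"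
  have F: "fock_moment N p q = vac ((U ^^ nat \<bar>p\<bar>) ((V ^^ nat \<bar>q\<bar>) xi))"
    by (simp add: fock_unfold U_def V_def)
  consider "p \<ge> 0" "q \<ge> 0" | "p < 0" "q < 0" | "p \<ge> 0" "q < 0" | "p < 0" "q > 0" | "p < 0" "q = 0"
    by linarith
  then show ?thesis
  proof cases
    case 1
    have UV: "U = upos N" "V = vpos N" using 1 by (simp_all add: U_def V_def)
    define m where "m = nat p"
    define n where "n = nat q"
    have mn: "nat \<bar>p\<bar> = m" "nat \<bar>q\<bar> = n" using 1 by (simp_all add: m_def n_def)
    have cu: "cong N (upos N)" and cv: "cong N (vpos N)" using cong_ops by auto
    have pc: "veq N ((upos N ^^ k) ((vpos N ^^ k) xi)) (((upos N \<circ> vpos N) ^^ k) xi)" for k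
      by (rule pow_comm[OF cu cv commutes_uv(1)])
    have EIk: "EI (\<lambda>w. tseq w = [] \<or> Q (tseq w)) (((upos N \<circ> vpos N) ^^ k) xi)"
      if "\<And>s. Jw (N True) Sp Sm s \<Longrightarrow> Q s" for k Q
      using conjunct2[OF uv_pow_pos[of N k, OF hA]] by (rule EI_mono) (auto intro: that)
    consider "m = n" | "m > n" | "m < n" by linarith
    then show ?thesis
    proof cases
      case 1
      then have "p = q" using \<open>p \<ge> 0\<close> \<open>q \<ge> 0\<close> m_def n_def by simp
      then show ?thesis using F UV mn veq_vac[OF pc[of n]] conjunct1[OF uv_pow_pos[of N n, OF hA]] 1 \<open>p \<ge> 0\<close> n_def
        by simp
    next
      case 2
      have "vac ((upos N ^^ m) ((vpos N ^^ n) xi)) = vac ((upos N ^^ (m - n)) ((upos N ^^ n) ((vpos N ^^ n) xi)))"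
        using 2 funpow_split[of n m "upos N"] by simp
      also have "\<dots> = vac ((upos N ^^ (m - n)) (((upos N \<circ> vpos N) ^^ n) xi))"
        by (rule veq_vac, rule funpow_veq[OF cu pc])
      also have "\<dots> = 0"
        by (rule kill_J[where Q = "Jf (N True) Sp"], rule upos_Jf[of N, OF hA], assumption, rule Jf_ne, assumption,
            rule EIk) (use 2 in \<open>auto simp: Jw_def Jf_def\<close>)
      finally show ?thesis using F UV mn 2 m_def n_def by auto
    next
      case 3
      have cm: "commutes N (upos N ^^ m) (vpos N ^^ (n - m))"
        by (rule commutes_funpow_right[OF cv], rule commutes_funpow_left[OF cu commutes_uv(1)])
      have "vac ((upos N ^^ m) ((vpos N ^^ n) xi)) = vac ((upos N ^^ m) ((vpos N ^^ (n - m)) ((vpos N ^^ m) xi)))"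
        using 3 funpow_split[of m n "vpos N"] by simp
      also have "\<dots> = vac ((vpos N ^^ (n - m)) ((upos N ^^ m) ((vpos N ^^ m) xi)))"
        using cm unfolding commutes_def by (blast intro: veq_vac)
      also have "\<dots> = vac ((vpos N ^^ (n - m)) (((upos N \<circ> vpos N) ^^ m) xi))"
        by (rule veq_vac, rule funpow_veq[OF cv pc])
      also have "\<dots> = 0"
        by (rule kill_J[where Q = "Jl (N True) Sm"], rule vpos_Jl, assumption, rule Jl_ne, assumption,
            rule EIk) (use 3 in \<open>auto simp: Jw_def Jl_def\<close>)
      finally show ?thesis using F UV mn 3 m_def n_def by auto
    qed
  next
    case 2
    have UV: "U = uneg N" "V = vneg N" using 2 by (simp_all add: U_def V_def)
    define m where "m = nat (-p)"
    define n where "n = nat (-q)"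
    have mn: "nat \<bar>p\<bar> = m" "nat \<bar>q\<bar> = n" using 2 by (simp_all add: m_def n_def)
    have cu: "cong N (uneg N)" and cv: "cong N (vneg N)" using cong_ops by auto
    have pc: "veq N ((uneg N ^^ k) ((vneg N ^^ k) xi)) (((uneg N \<circ> vneg N) ^^ k) xi)" for k
      by (rule pow_comm[OF cu cv commutes_uv(2)])
    have EIk: "EI (\<lambda>w. tseq w = [] \<or> Q (tseq w)) (((uneg N \<circ> vneg N) ^^ k) xi)"
      if "\<And>s. Jw (N True) Sm Sp s \<Longrightarrow> Q s" for k Q
      using conjunct2[OF uv_pow_neg[of N k, OF hA]] by (rule EI_mono) (auto intro: that)
    consider "m = n" | "m > n" | "m < n" by linarith
    then show ?thesis
    proof cases
      case 1
      then have "p = q" using \<open>p < 0\<close> \<open>q < 0\<close> m_def n_def by simp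
      then show ?thesis using F UV mn veq_vac[OF pc[of n]] conjunct1[OF uv_pow_neg[of N n, OF hA]] 1 \<open>p < 0\<close> n_def
        by simp
    next
      case 2
      have "vac ((uneg N ^^ m) ((vneg N ^^ n) xi)) = vac ((uneg N ^^ (m - n)) ((uneg N ^^ n) ((vneg N ^^ n) xi)))"
        using 2 funpow_split[of n m "uneg N"] by simp
      also have "\<dots> = vac ((uneg N ^^ (m - n)) (((uneg N \<circ> vneg N) ^^ n) xi))"
        by (rule veq_vac, rule funpow_veq[OF cu pc])
      also have "\<dots> = 0"
        by (rule kill_J[where Q = "Jf (N True) Sm"], rule uneg_Jf, assumption, rule Jf_ne, assumption,
            rule EIk) (use 2 in \<open>auto simp: Jw_def Jf_def\<close>)
      finally show ?thesis using F UV mn 2 m_def n_def by auto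
    next
      case 3
      have cm: "commutes N (uneg N ^^ m) (vneg N ^^ (n - m))"
        by (rule commutes_funpow_right[OF cv], rule commutes_funpow_left[OF cu commutes_uv(2)])
      have "vac ((uneg N ^^ m) ((vneg N ^^ n) xi)) = vac ((uneg N ^^ m) ((vneg N ^^ (n - m)) ((vneg N ^^ m) xi)))"
        using 3 funpow_split[of m n "vneg N"] by simp
      also have "\<dots> = vac ((vneg N ^^ (n - m)) ((uneg N ^^ m) ((vneg N ^^ m) xi)))"
        using cm unfolding commutes_def by (blast intro: veq_vac)
      also have "\<dots> = vac ((vneg N ^^ (n - m)) (((uneg N \<circ> vneg N) ^^ m) xi))"
        by (rule veq_vac, rule funpow_veq[OF cv pc])
      also have "\<dots> = 0"
        by (rule kill_J[where Q = "Jl (N True) Sp"], rule vneg_Jl, assumption, rule Jl_ne, assumption,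
            rule EIk) (use 3 in \<open>auto simp: Jw_def Jl_def\<close>)
      finally show ?thesis using F UV mn 3 m_def n_def by auto
    qed
  next
    case 3
    have "vac ((U ^^ nat \<bar>p\<bar>) ((V ^^ nat \<bar>q\<bar>) xi)) = 0"
    proof (rule kill_VU[where G = "GS (N True) Sp"])
      fix X assume "EI (\<lambda>w. hasG (GS (N True) Sp) (tseq w) \<or> (True \<and> tseq w = [])) X"
      then show "EI (\<lambda>w. hasG (GS (N True) Sp) (tseq w)) (V X)"
        unfolding V_def using 3 by (auto intro!: vneg_hasG simp: S_facts hA P_GS[of N, OF hA])
    next
      fix X assume "EI (\<lambda>w. hasG (GS (N True) Sp) (tseq w) \<or> (False \<and> tseq w = [])) X"
      then show "EI (\<lambda>w. hasG (GS (N True) Sp) (tseq w)) (U X)"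
        unfolding U_def using 3 by (auto intro!: upos_hasG[where C = False] simp: S_facts)
    qed (use 3 in auto)
    then show ?thesis using F 3 by simp
  next
    case 4
    have "vac ((U ^^ nat \<bar>p\<bar>) ((V ^^ nat \<bar>q\<bar>) xi)) = 0"
    proof (rule kill_VU[where G = "GS (N True) Sm"])
      fix X assume "EI (\<lambda>w. hasG (GS (N True) Sm) (tseq w) \<or> (True \<and> tseq w = [])) X"
      then show "EI (\<lambda>w. hasG (GS (N True) Sm) (tseq w)) (V X)"
        unfolding V_def using 4 by (auto intro!: vpos_hasG simp: S_facts hA P_GS[of N, OF hA])
    next
      fix X assume "EI (\<lambda>w. hasG (GS (N True) Sm) (tseq w) \<or> (False \<and> tseq w = [])) X"
      then show "EI (\<lambda>w. hasG (GS (N True) Sm) (tseq w)) (U X)"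
        unfolding U_def using 4 by (auto intro!: uneg_hasG[where C = False] simp: S_facts)
    qed (use 4 in auto)
    then show ?thesis using F 4 by simp
  next
    case 5
    have Y: "EI (\<lambda>w. hasG G (tseq w) \<or> (True \<and> tseq w = [])) xi" for G
      using EI_xi by (rule EI_mono) simp
    have "vac ((U ^^ nat \<bar>p\<bar>) xi) = 0"
    proof (rule kill_pow[OF _ Y])
      fix X assume "EI (\<lambda>w. hasG (GS (N True) Sm) (tseq w) \<or> (True \<and> tseq w = [])) X"
      then show "EI (\<lambda>w. hasG (GS (N True) Sm) (tseq w)) (U X)"
        unfolding U_def using 5 by (auto intro!: uneg_hasG simp: S_facts hA P_GS[of N, OF hA])
    qed (use 5 in auto)
    then show ?thesis using F 5 by (simp add: V_def)
  qed
qed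

end

definition circ :: "complex set" where "circ = {z. cmod z = 1}"

lemma torus2_circ: "torus2 = circ \<times> circ" by (auto simp: torus2_def circ_def)

lemma closed_circ: "closed circ"
proof -
  have "circ = cmod -` {1}" by (auto simp: circ_def)
  then show ?thesis by (metis closed_singleton closed_vimage continuous_on_norm_id)
qed

lemma closed_torus2: "closed torus2"
  unfolding torus2_circ by (intro closed_Times closed_circ)

lemma circ_sets[measurable]: "circ \<in> sets borel" by (simp add: closed_circ)
lemma torus2_sets[measurable]: "torus2 \<in> sets borel" by (simp add: closed_torus2)

lemma borel_measurable_powi[measurable]:
  fixes f :: "'a \<Rightarrow> complex"
  assumes [measurable]: "f \<in> borel_measurable M"
  shows "(\<lambda>x. f x powi n) \<in> borel_measurable M"
proof (cases "n \<ge> 0")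
  case True
  then show ?thesis unfolding power_int_def by simp
next
  case False
  then show ?thesis unfolding power_int_def by simp
qed

lemma fst_meas_borel[measurable]: "(fst :: complex \<times> complex \<Rightarrow> complex) \<in> borel_measurable borel"
  unfolding borel_prod[symmetric] by measurable
lemma snd_meas_borel[measurable]: "(snd :: complex \<times> complex \<Rightarrow> complex) \<in> borel_measurable borel"
  unfolding borel_prod[symmetric] by measurable

lemma cnj_meas[measurable]: "(\<lambda>x. cnj (f x)) \<in> borel_measurable M" if [measurable]: "f \<in> borel_measurable M" for f :: "'a \<Rightarrow> complex"
proof -
  have "cnj \<in> borel_measurable borel" by (rule borel_measurable_continuous_onI) (intro continuous_intros)
  then show ?thesis using measurable_compose that by blast
qed

lemma mono_meas[measurable]: "(\<lambda>z::complex \<times> complex. fst z powi a * snd z powi b) \<in> borel_measurable borel"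
  by measurable

lemma powi_circ_norm: "z \<in> circ \<Longrightarrow> cmod (z powi n) = 1"
  by (simp add: circ_def norm_power_int)

lemma circ_inverse: assumes "z \<in> circ" shows "inverse z = cnj z"
proof -
  have "z * cnj z = 1" using complex_norm_square[of z] assms by (simp add: circ_def)
  then show ?thesis by (rule inverse_unique)
qed

lemma circ_ne0: "z \<in> circ \<Longrightarrow> z \<noteq> 0" by (auto simp: circ_def)

lemma PT2_prob: "PT2 \<nu> \<Longrightarrow> prob_space \<nu>" by (simp add: PT2_def)
lemma PT2_sets: "PT2 \<nu> \<Longrightarrow> sets \<nu> = sets borel" by (simp add: PT2_def)
lemma PT2_space: "PT2 \<nu> \<Longrightarrow> space \<nu> = UNIV"
  using sets_eq_imp_space_eq[OF PT2_sets] by simp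

lemma PT2_AE: assumes "PT2 \<nu>" shows "AE z in \<nu>. z \<in> torus2"
proof -
  have "{z \<in> space \<nu>. \<not> z \<in> torus2} = UNIV - torus2" using PT2_space[OF assms] by auto
  moreover have "UNIV - torus2 \<in> sets \<nu>" using PT2_sets[OF assms] by simp
  ultimately show ?thesis using assms unfolding PT2_def by (subst AE_iff_measurable) auto
qed

lemma PT2_meas: "PT2 \<nu> \<Longrightarrow> f \<in> borel_measurable borel \<Longrightarrow> f \<in> borel_measurable \<nu>"
  using PT2_sets measurable_cong_sets by blast

lemma PT2_integrable_mono: assumes "PT2 \<nu>" shows "integrable \<nu> (\<lambda>z. fst z powi a * snd z powi b)"
proof -
  interpret prob_space \<nu> using PT2_prob[OF assms] .
  show ?thesis
  proof (rule integrable_const_bound[where B = 1])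
    show "AE x in \<nu>. norm (fst x powi a * snd x powi b) \<le> 1"
      using PT2_AE[OF assms] by eventually_elim (auto simp: torus2_circ norm_mult powi_circ_norm)
    show "(\<lambda>z. fst z powi a * snd z powi b) \<in> borel_measurable \<nu>" by (rule PT2_meas[OF assms]) simp
  qed
qed

lemma tmom_00: "PT2 \<nu> \<Longrightarrow> tmom \<nu> 0 0 = 1"
  unfolding tmom_def using PT2_prob prob_space.prob_space by (simp add: prob_space.prob_space)

lemma tmom_cnj: assumes "PT2 \<nu>" shows "tmom \<nu> (-a) (-b) = cnj (tmom \<nu> a b)"
proof -
  have "cnj (tmom \<nu> a b) = (\<integral>z. cnj (fst z powi a * snd z powi b) \<partial>\<nu>)" unfolding tmom_def by (simp only: Bochner_Integration.integral_cnj)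
  also have "\<dots> = tmom \<nu> (-a) (-b)" unfolding tmom_def
  proof (rule integral_cong_AE)
    show "AE x in \<nu>. cnj (fst x powi a * snd x powi b) = fst x powi - a * snd x powi - b"
      using PT2_AE[OF assms] by eventually_elim
        (auto simp: torus2_circ circ_inverse[symmetric] power_int_inverse power_int_minus)
  qed (auto intro!: PT2_meas[OF assms] simp del: complex_cnj_mult complex_cnj_power_int)
  finally show ?thesis by simp
qed

lemma tstar_f_meas[measurable]: "(\<lambda>z::complex \<times> complex. (fst z, inverse (snd z))) \<in> borel_measurable borel"
  unfolding borel_prod[symmetric] by measurable

lemma meas_borel_cong: "sets \<mu> = sets borel \<Longrightarrow> f \<in> measurable borel N \<Longrightarrow> f \<in> measurable \<mu> N"
  using measurable_cong_sets[of \<mu> borel N N] by simp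

lemma tmom_tstar: assumes "sets \<mu> = sets borel" shows "tmom (tstar \<mu>) a b = tmom \<mu> a (-b)"
proof -
  have m: "(\<lambda>z::complex \<times> complex. (fst z, inverse (snd z))) \<in> measurable \<mu> borel"
    using meas_borel_cong[OF assms tstar_f_meas] .
  show ?thesis unfolding tmom_def tstar_def
    by (subst integral_distr[OF m]) (simp_all add: power_int_inverse power_int_minus)
qed

lemma sets_tstar[simp]: "sets (tstar \<mu>) = sets borel" by (simp add: tstar_def)

lemma tstar_tstar: assumes "sets \<mu> = sets borel" shows "tstar (tstar \<mu>) = \<mu>"
proof -
  have m: "(\<lambda>z::complex \<times> complex. (fst z, inverse (snd z))) \<in> measurable \<mu> borel"
    using meas_borel_cong[OF assms tstar_f_meas] .
  have "tstar (tstar \<mu>) = distr \<mu> borel ((\<lambda>z::complex \<times> complex. (fst z, inverse (snd z))) \<circ> (\<lambda>z. (fst z, inverse (snd z))))"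
    unfolding tstar_def by (rule distr_distr) (simp_all add: m)
  also have "\<dots> = distr \<mu> borel (\<lambda>z. z)" by (simp add: o_def)
  also have "\<dots> = distr \<mu> \<mu> (\<lambda>z. z)" by (rule distr_cong) (simp_all add: assms)
  also have "\<dots> = \<mu>" by (rule distr_id)
  finally show ?thesis .
qed

lemma PT2_tstar: assumes "PT2 \<mu>" shows "PT2 (tstar \<mu>)"
proof -
  have m: "(\<lambda>z::complex \<times> complex. (fst z, inverse (snd z))) \<in> measurable \<mu> borel"
    using meas_borel_cong[OF PT2_sets[OF assms] tstar_f_meas] .
  have "prob_space (tstar \<mu>)" unfolding tstar_def
    using prob_space.prob_space_distr[OF PT2_prob[OF assms] m] .
  moreover have "emeasure (tstar \<mu>) (UNIV - torus2) = 0"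
  proof -
    have "emeasure (tstar \<mu>) (UNIV - torus2) = emeasure \<mu> ((\<lambda>z. (fst z, inverse (snd z))) -` (UNIV - torus2) \<inter> space \<mu>)"
      unfolding tstar_def by (rule emeasure_distr[OF m]) simp
    also have "(\<lambda>z. (fst z, inverse (snd z))) -` (UNIV - torus2) \<inter> space \<mu> = UNIV - torus2"
      using PT2_space[OF assms] by (auto simp: torus2_def norm_inverse)
    finally show ?thesis using assms by (simp add: PT2_def)
  qed
  ultimately show ?thesis by (simp add: PT2_def)
qed

lemma cisf_meas[measurable]: "(\<lambda>t::real. cis (2 * pi * t)) \<in> borel_measurable borel"
  by (rule borel_measurable_continuous_onI) (intro continuous_intros)

lemma R01_prob: "prob_space (restrict_space lborel {0..1::real})"
  by (rule prob_spaceI) (simp add: emeasure_restrict_space space_restrict_space)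

lemma cisf_meas_R: "(\<lambda>t::real. cis (2 * pi * t)) \<in> measurable (restrict_space lborel {0..1}) borel"
  by (rule measurable_restrict_space1) simp

lemma sets_haarT[simp]: "sets haarT = sets borel" by (simp add: haarT_def)
lemma space_haarT[simp]: "space haarT = UNIV" by (simp add: haarT_def)

lemma prob_haarT: "prob_space haarT"
  unfolding haarT_def by (rule prob_space.prob_space_distr[OF R01_prob cisf_meas_R])

lemma AE_haarT: "AE z in haarT. z \<in> circ"
  unfolding haarT_def
  by (subst AE_distr_iff[OF cisf_meas_R]) (auto simp: circ_def)

lemma int_cis_mult:
  fixes k :: int assumes "k \<noteq> 0"
  shows "integral\<^sup>L lborel (\<lambda>t. indicator {0..1::real} t *\<^sub>R cis (of_int k * (2 * pi * t))) = 0"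
proof -
  define c where "c = 2 * pi * of_int k"
  have c0: "c \<noteq> 0" using assms by (simp add: c_def)
  define F where "F = (\<lambda>t::real. (- \<i> / complex_of_real c) * cis (c * t))"
  have der: "(F has_vector_derivative cis (of_int k * (2 * pi * t))) (at t within {0..1})" for t
  proof -
    have "((\<lambda>t. cis (c * t)) has_derivative (\<lambda>h. (h * c) *\<^sub>R (\<i> * cis (c * t)))) (at t within {0..1})"
      by (rule has_derivative_cis) (auto intro!: derivative_eq_intros)
    then have "((\<lambda>t. cis (c * t)) has_vector_derivative (c *\<^sub>R (\<i> * cis (c * t)))) (at t within {0..1})"
      unfolding has_vector_derivative_def by (simp add: algebra_simps)
    then have "(F has_vector_derivative ((- \<i> / complex_of_real c) * (c *\<^sub>R (\<i> * cis (c * t))))) (at t within {0..1})"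
      unfolding F_def by (rule has_vector_derivative_mult_right)
    moreover have "(- \<i> / complex_of_real c) * (c *\<^sub>R (\<i> * cis (c * t))) = cis (of_int k * (2 * pi * t))"
      using c0 by (simp add: scaleR_conv_of_real field_simps c_def)
    ultimately show ?thesis by simp
  qed
  have "integral\<^sup>L lborel (\<lambda>t. indicator {0..1::real} t *\<^sub>R cis (of_int k * (2 * pi * t))) = F 1 - F 0"
    by (rule integral_FTC_atLeastAtMost) (auto intro!: der continuous_intros)
  also have "F 1 = F 0"
  proof -
    have "cis c = 1" unfolding c_def
      using cos_int_2pin[of k] sin_int_2pin[of k] by (simp add: complex_eq_iff)
    then show ?thesis by (simp add: F_def)
  qed
  finally show ?thesis by simp
qed

lemma int_haarT: "(\<integral>z. z powi k \<partial>haarT) = (if k = 0 then 1 else 0)"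
proof (cases "k = 0")
  case True
  then show ?thesis using prob_space.prob_space[OF prob_haarT] by simp
next
  case False
  have "(\<integral>z. z powi k \<partial>haarT) = (\<integral>t. cis (2 * pi * t) powi k \<partial>restrict_space lborel {0..1})"
    unfolding haarT_def by (rule integral_distr[OF cisf_meas_R]) simp
  also have "\<dots> = integral\<^sup>L lborel (\<lambda>t. indicator {0..1::real} t *\<^sub>R cis (2 * pi * t) powi k)"
    by (rule integral_restrict_space) simp
  also have "\<dots> = integral\<^sup>L lborel (\<lambda>t. indicator {0..1::real} t *\<^sub>R cis (of_int k * (2 * pi * t)))"
    by (simp add: cis_power_int)
  also have "\<dots> = 0" by (rule int_cis_mult[OF False])
  finally show ?thesis using False by simp
qed


lemma PT2I: assumes "prob_space \<nu>" "sets \<nu> = sets borel" "AE z in \<nu>. z \<in> torus2" shows "PT2 \<nu>"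
proof -
  have sp: "space \<nu> = UNIV" using sets_eq_imp_space_eq[OF assms(2)] by simp
  have "{z \<in> space \<nu>. \<not> z \<in> torus2} = UNIV - torus2" using sp by auto
  moreover have "UNIV - torus2 \<in> sets \<nu>" using assms(2) by simp
  ultimately have "emeasure \<nu> (UNIV - torus2) = 0" using assms(3) by (subst (asm) AE_iff_measurable) auto
  then show ?thesis using assms by (simp add: PT2_def)
qed

locale circmeas =
  fixes M :: "complex measure"
  assumes prob: "prob_space M" and sets_M: "sets M = sets borel" and AE_circ: "AE z in M. z \<in> circ"

lemma circmeas_haarT: "circmeas haarT"
  by (simp add: circmeas_def prob_haarT AE_haarT)

lemma sets_delta1[simp]: "sets delta1 = sets borel" and space_delta1[simp]: "space delta1 = UNIV"
  by (simp_all add: delta1_def)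

lemma circmeas_delta1: "circmeas delta1"
  unfolding circmeas_def delta1_def
  by (auto simp: prob_space_return AE_return circ_def)

lemma int_delta1: "(\<integral>z. z powi k \<partial>delta1) = 1"
  unfolding delta1_def by (subst integral_return) auto

lemma snd_meas_nu: "PT2 \<nu> \<Longrightarrow> snd \<in> measurable \<nu> borel"
  using meas_borel_cong[OF PT2_sets snd_meas_borel] .
lemma fst_meas_nu: "PT2 \<nu> \<Longrightarrow> fst \<in> measurable \<nu> borel"
  using meas_borel_cong[OF PT2_sets fst_meas_borel] .

lemma circmeas_marg2: assumes "PT2 \<nu>" shows "circmeas (marg2 \<nu>)"
  unfolding circmeas_def marg2_def
proof (intro conjI)
  show "prob_space (distr \<nu> borel snd)" by (rule prob_space.prob_space_distr[OF PT2_prob[OF assms] snd_meas_nu[OF assms]])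
  show "AE z in distr \<nu> borel snd. z \<in> circ"
    by (subst AE_distr_iff[OF snd_meas_nu[OF assms]]) (use PT2_AE[OF assms] in \<open>auto simp: torus2_circ elim: eventually_mono\<close>)
qed simp

lemma circmeas_marg1: assumes "PT2 \<nu>" shows "circmeas (marg1 \<nu>)"
  unfolding circmeas_def marg1_def
proof (intro conjI)
  show "prob_space (distr \<nu> borel fst)" by (rule prob_space.prob_space_distr[OF PT2_prob[OF assms] fst_meas_nu[OF assms]])
  show "AE z in distr \<nu> borel fst. z \<in> circ"
    by (subst AE_distr_iff[OF fst_meas_nu[OF assms]]) (use PT2_AE[OF assms] in \<open>auto simp: torus2_circ elim: eventually_mono\<close>)
qed simp

lemma int_marg2: "PT2 \<nu> \<Longrightarrow> (\<integral>z. z powi k \<partial>marg2 \<nu>) = tmom \<nu> 0 k"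
  unfolding marg2_def tmom_def by (subst integral_distr[OF snd_meas_nu]) auto
lemma int_marg1: "PT2 \<nu> \<Longrightarrow> (\<integral>z. z powi k \<partial>marg1 \<nu>) = tmom \<nu> k 0"
  unfolding marg1_def tmom_def by (subst integral_distr[OF fst_meas_nu]) auto

lemma PT2_pair:
  assumes "circmeas M1" "circmeas M2"
  shows "PT2 (M1 \<Otimes>\<^sub>M M2)"
proof -
  interpret A: circmeas M1 by fact
  interpret B: circmeas M2 by fact
  interpret P: pair_prob_space M1 M2
    by (simp add: pair_prob_space_def pair_sigma_finite_def prob_space_imp_sigma_finite A.prob B.prob)
  have "sets (M1 \<Otimes>\<^sub>M M2) = sets (borel \<Otimes>\<^sub>M borel)"
    by (rule sets_pair_measure_cong[OF A.sets_M B.sets_M])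
  then have sets: "sets (M1 \<Otimes>\<^sub>M M2) = sets borel" unfolding borel_prod .
  have "AE z in M1 \<Otimes>\<^sub>M M2. z \<in> torus2"
  proof (rule P.AE_pair_measure)
    show "{x \<in> space (M1 \<Otimes>\<^sub>M M2). x \<in> torus2} \<in> sets (M1 \<Otimes>\<^sub>M M2)"
      using sets sets_eq_imp_space_eq[OF sets] by simp
    show "AE x in M1. AE y in M2. (x, y) \<in> torus2"
      using A.AE_circ
    proof eventually_elim
      case (elim x)
      show ?case using B.AE_circ by eventually_elim (use elim in \<open>auto simp: torus2_circ\<close>)
    qed
  qed
  then show ?thesis using sets by (intro PT2I P.prob_space_axioms)
qed

lemma tmom_pair:
  assumes "circmeas M1" "circmeas M2"
  shows "tmom (M1 \<Otimes>\<^sub>M M2) a b = (\<integral>z. z powi a \<partial>M1) * (\<integral>z. z powi b \<partial>M2)"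
proof -
  interpret A: circmeas M1 by fact
  interpret B: circmeas M2 by fact
  interpret P: pair_prob_space M1 M2
    by (simp add: pair_prob_space_def pair_sigma_finite_def prob_space_imp_sigma_finite A.prob B.prob)
  have eq: "(\<lambda>z. fst z powi a * snd z powi b) = (\<lambda>(x, y). x powi a * y powi b)" by auto
  have int: "integrable (M1 \<Otimes>\<^sub>M M2) (\<lambda>(x, y). x powi a * y powi b)"
    using PT2_integrable_mono[OF PT2_pair[OF assms], of a b] unfolding eq .
  have "tmom (M1 \<Otimes>\<^sub>M M2) a b = integral\<^sup>L (M1 \<Otimes>\<^sub>M M2) (\<lambda>(x, y). x powi a * y powi b)"
    unfolding tmom_def eq ..
  also have "\<dots> = (\<integral>x. (\<integral>y. x powi a * y powi b \<partial>M2) \<partial>M1)"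
    using P.integral_fst[OF int] by simp
  also have "\<dots> = (\<integral>z. z powi a \<partial>M1) * (\<integral>z. z powi b \<partial>M2)" by simp
  finally show ?thesis .
qed

lemma Pf_meas[measurable]: "(\<lambda>s::complex. (s, cnj s)) \<in> measurable borel borel"
  unfolding borel_prod[symmetric] by measurable

lemma sets_Pmeas[simp]: "sets Pmeas = sets borel" by (simp add: Pmeas_def)

lemma tmom_Pmeas: "tmom Pmeas a b = (if a = b then 1 else 0)"
proof -
  have m: "(\<lambda>s::complex. (s, cnj s)) \<in> measurable haarT borel"
    using meas_borel_cong[OF sets_haarT Pf_meas] .
  have "tmom Pmeas a b = (\<integral>s. s powi a * cnj s powi b \<partial>haarT)"
    unfolding tmom_def Pmeas_def by (subst integral_distr[OF m]) (simp_all del: complex_cnj_power_int)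
  also have "\<dots> = (\<integral>s. s powi (a - b) \<partial>haarT)"
  proof (rule integral_cong_AE)
    show "AE x in haarT. x powi a * cnj x powi b = x powi (a - b)"
      using AE_haarT
    proof eventually_elim
      case (elim x)
      then have "x \<noteq> 0" by (rule circ_ne0)
      then show ?case using circ_inverse[OF elim]
        by (simp add: power_int_diff power_int_inverse divide_inverse flip: circ_inverse[OF elim] del: complex_cnj_power_int)
    qed
  qed (auto intro!: meas_borel_cong[OF sets_haarT] simp del: complex_cnj_power_int)
  also have "\<dots> = (if a = b then 1 else 0)" by (simp add: int_haarT)
  finally show ?thesis .
qed

definition evalL :: "lpoly \<Rightarrow> complex \<times> complex \<Rightarrow> complex" where
  "evalL L z = (\<Sum>t\<leftarrow>L. snd t * (fst z powi fst (fst t) * snd z powi snd (fst t)))"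

lemma evalL_simps[simp]: "evalL [] z = 0"
  "evalL (t # L) z = snd t * (fst z powi fst (fst t) * snd z powi snd (fst t)) + evalL L z"
  "evalL (L1 @ L2) z = evalL L1 z + evalL L2 z"
  by (simp_all add: evalL_def)

lemma evalL_meas[measurable]: "evalL L \<in> borel_measurable borel"
proof (induction L)
  case Nil then show ?case by (simp add: evalL_def)
next
  case (Cons t L)
  have e: "evalL (t # L) = (\<lambda>z. snd t * (fst z powi fst (fst t) * snd z powi snd (fst t)) + evalL L z)"
    by (simp add: fun_eq_iff)
  show ?case unfolding e using Cons by measurable
qed

lemma integrable_evalL: assumes "PT2 \<mu>" shows "integrable \<mu> (evalL L)"
proof (induction L)
  case Nil then show ?case by (simp add: evalL_def)
next
  case (Cons t L)
  have e: "evalL (t # L) = (\<lambda>z. snd t * (fst z powi fst (fst t) * snd z powi snd (fst t)) + evalL L z)"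
    by (simp add: fun_eq_iff)
  show ?case unfolding e using Cons PT2_integrable_mono[OF assms] by simp
qed

lemma int_evalL: assumes "PT2 \<mu>" shows "(\<integral>z. evalL L z \<partial>\<mu>) = lexp \<mu> L"
proof (induction L)
  case Nil then show ?case by (simp add: evalL_def lexp_def)
next
  case (Cons t L)
  have e: "evalL (t # L) = (\<lambda>z. snd t * (fst z powi fst (fst t) * snd z powi snd (fst t)) + evalL L z)"
    by (simp add: fun_eq_iff)
  show ?case unfolding e using Cons PT2_integrable_mono[OF assms] integrable_evalL[OF assms]
    by (simp add: lexp_def tmom_def)
qed

definition trigf :: "(complex \<times> complex \<Rightarrow> real) \<Rightarrow> bool" where
  "trigf g \<longleftrightarrow> (\<exists>L. \<forall>z\<in>torus2. complex_of_real (g z) = evalL L z)"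

definition prodL :: "lpoly \<Rightarrow> lpoly \<Rightarrow> lpoly" where
  "prodL L1 L2 = concat (map (\<lambda>t1. map (\<lambda>t2. ((fst (fst t1) + fst (fst t2), snd (fst t1) + snd (fst t2)), snd t1 * snd t2)) L2) L1)"

lemma evalL_prodL:
  assumes "fst z \<noteq> 0" "snd z \<noteq> 0"
  shows "evalL (prodL L1 L2) z = evalL L1 z * evalL L2 z"
proof (induction L1)
  case Nil then show ?case by (simp add: prodL_def)
next
  case (Cons t1 L1)
  have "evalL (map (\<lambda>t2. ((fst (fst t1) + fst (fst t2), snd (fst t1) + snd (fst t2)), snd t1 * snd t2)) L2) z =
        snd t1 * (fst z powi fst (fst t1) * snd z powi snd (fst t1)) * evalL L2 z"
    by (induction L2) (auto simp: power_int_add assms algebra_simps)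
  then show ?case using Cons by (simp add: prodL_def algebra_simps)
qed

lemma re_im_circ:
  fixes a b :: real assumes "w \<in> circ"
  shows "(complex_of_real a - \<i> * complex_of_real b) / 2 * (w powi 1) + (complex_of_real a + \<i> * complex_of_real b) / 2 * (w powi (-1))
     = complex_of_real (Re w * a + Im w * b)"
proof -
  have e: "w powi (-1) = cnj w" using circ_inverse[OF assms] by (simp add: power_int_minus)
  show ?thesis unfolding e by (simp add: complex_eq_iff field_simps)
qed

lemma trig_linear: assumes "bounded_linear f" shows "trigf f"
proof -
  interpret bounded_linear f by fact
  define \<alpha> where "\<alpha> = f (1, 0)"
  define \<beta> where "\<beta> = f (\<i>, 0)"
  define \<gamma> where "\<gamma> = f (0, 1)"
  define \<delta> where "\<delta> = f (0, \<i>)"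
  have fz: "f z = Re (fst z) * \<alpha> + Im (fst z) * \<beta> + (Re (snd z) * \<gamma> + Im (snd z) * \<delta>)" for z
  proof -
    have "z = (Re (fst z) *\<^sub>R (1, 0) + Im (fst z) *\<^sub>R (\<i>, 0)) + (Re (snd z) *\<^sub>R (0, 1) + Im (snd z) *\<^sub>R (0, \<i>))"
      by (cases z) (simp add: complex_eq_iff)
    then have "f z = f (Re (fst z) *\<^sub>R (1, 0) + Im (fst z) *\<^sub>R (\<i>, 0) + (Re (snd z) *\<^sub>R (0, 1) + Im (snd z) *\<^sub>R (0, \<i>)))"
      by simp
    also have "\<dots> = Re (fst z) *\<^sub>R f (1, 0) + Im (fst z) *\<^sub>R f (\<i>, 0) + (Re (snd z) *\<^sub>R f (0, 1) + Im (snd z) *\<^sub>R f (0, \<i>))"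
      by (simp only: add scale)
    also have "\<dots> = Re (fst z) * \<alpha> + Im (fst z) * \<beta> + (Re (snd z) * \<gamma> + Im (snd z) * \<delta>)"
      by (simp add: \<alpha>_def \<beta>_def \<gamma>_def \<delta>_def)
    finally show ?thesis .
  qed
  define L where "L = [((1::int, 0::int), (complex_of_real \<alpha> - \<i> * complex_of_real \<beta>) / 2),
                       ((-1, 0), (complex_of_real \<alpha> + \<i> * complex_of_real \<beta>) / 2),
                       ((0, 1), (complex_of_real \<gamma> - \<i> * complex_of_real \<delta>) / 2),
                       ((0, -1), (complex_of_real \<gamma> + \<i> * complex_of_real \<delta>) / 2)]"
  have "complex_of_real (f z) = evalL L z" if "z \<in> torus2" for z
  proof -
    have c: "fst z \<in> circ" "snd z \<in> circ" using that by (auto simp: torus2_circ)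
    have "evalL L z = ((complex_of_real \<alpha> - \<i> * complex_of_real \<beta>) / 2 * (fst z powi 1) + (complex_of_real \<alpha> + \<i> * complex_of_real \<beta>) / 2 * (fst z powi (-1)))
       + ((complex_of_real \<gamma> - \<i> * complex_of_real \<delta>) / 2 * (snd z powi 1) + (complex_of_real \<gamma> + \<i> * complex_of_real \<delta>) / 2 * (snd z powi (-1)))"
      by (simp add: L_def del: power_int_1_right)
    also have "\<dots> = complex_of_real (Re (fst z) * \<alpha> + Im (fst z) * \<beta>) + complex_of_real (Re (snd z) * \<gamma> + Im (snd z) * \<delta>)"
      using re_im_circ[OF c(1)] re_im_circ[OF c(2)] by simp
    finally show ?thesis using fz[of z] by simp
  qed
  then show ?thesis unfolding trigf_def by blast
qed

lemma trig_poly: "real_polynomial_function g \<Longrightarrow> trigf g"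
proof (induction rule: real_polynomial_function.induct)
  case (linear f) then show ?case by (rule trig_linear)
next
  case (const c)
  have "complex_of_real c = evalL [((0, 0), complex_of_real c)] z" for z by simp
  then show ?case unfolding trigf_def by blast
next
  case (add f g)
  then obtain L1 L2 where "\<forall>z\<in>torus2. complex_of_real (f z) = evalL L1 z" "\<forall>z\<in>torus2. complex_of_real (g z) = evalL L2 z"
    unfolding trigf_def by blast
  then have "\<forall>z\<in>torus2. complex_of_real (f z + g z) = evalL (L1 @ L2) z" by simp
  then show ?case unfolding trigf_def by blast
next
  case (mult f g)
  then obtain L1 L2 where L: "\<forall>z\<in>torus2. complex_of_real (f z) = evalL L1 z" "\<forall>z\<in>torus2. complex_of_real (g z) = evalL L2 z"
    unfolding trigf_def by blast
  have "\<forall>z\<in>torus2. complex_of_real (f z * g z) = evalL (prodL L1 L2) z"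
  proof
    fix z assume z: "z \<in> torus2"
    then have "fst z \<noteq> 0" "snd z \<noteq> 0" by (auto simp: torus2_def)
    then show "complex_of_real (f z * g z) = evalL (prodL L1 L2) z" using L z by (simp add: evalL_prodL)
  qed
  then show ?case unfolding trigf_def by blast
qed

lemma compact_torus2_aux: "compact torus2"
proof -
  have "bounded circ" unfolding circ_def bounded_iff by auto
  then have "compact circ" using closed_circ compact_eq_bounded_closed by blast
  then show ?thesis unfolding torus2_circ by (intro compact_Times)
qed

lemma cont_bounded_torus:
  fixes f :: "complex \<times> complex \<Rightarrow> real"
  assumes "continuous_on UNIV f"
  obtains B where "\<And>z. z \<in> torus2 \<Longrightarrow> \<bar>f z\<bar> \<le> B"
proof -
  have "compact (f ` torus2)"
    by (rule compact_continuous_image) (use assms compact_torus2_aux in \<open>auto intro: continuous_on_subset\<close>)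
  then obtain B where "\<forall>x\<in>f ` torus2. norm x \<le> B" using compact_imp_bounded bounded_iff by metis
  then show ?thesis using that by auto
qed


lemma integrable_cont:
  fixes f :: "complex \<times> complex \<Rightarrow> real"
  assumes "PT2 \<mu>" "continuous_on UNIV f"
  shows "integrable \<mu> f"
proof -
  interpret prob_space \<mu> by (rule PT2_prob[OF assms(1)])
  obtain B where B: "\<And>z. z \<in> torus2 \<Longrightarrow> \<bar>f z\<bar> \<le> B" using cont_bounded_torus[OF assms(2)] by blast
  show ?thesis
  proof (rule integrable_const_bound[where B = B])
    show "AE x in \<mu>. norm (f x) \<le> B" using PT2_AE[OF assms(1)] by eventually_elim (simp add: B)
    show "f \<in> borel_measurable \<mu>"
      by (rule PT2_meas[OF assms(1)], rule borel_measurable_continuous_onI[OF assms(2)])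
  qed
qed

lemma int_close:
  fixes h :: "complex \<times> complex \<Rightarrow> real"
  assumes "PT2 \<mu>" "integrable \<mu> h" "AE z in \<mu>. \<bar>h z\<bar> \<le> e"
  shows "\<bar>integral\<^sup>L \<mu> h\<bar> \<le> e"
proof -
  interpret prob_space \<mu> by (rule PT2_prob[OF assms(1)])
  have "\<bar>integral\<^sup>L \<mu> h\<bar> \<le> integral\<^sup>L \<mu> (\<lambda>z. \<bar>h z\<bar>)" by (rule integral_abs_bound)
  also have "\<dots> \<le> integral\<^sup>L \<mu> (\<lambda>z. e)"
    by (rule integral_mono_AE) (use assms in auto)
  also have "\<dots> = e" by (simp add: prob_space)
  finally show ?thesis .
qed

lemma int_poly_eq:
  fixes g :: "complex \<times> complex \<Rightarrow> real"
  assumes "PT2 \<mu>" "PT2 \<nu>" "\<And>a b. tmom \<mu> a b = tmom \<nu> a b" "real_polynomial_function g"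
  shows "integral\<^sup>L \<mu> g = integral\<^sup>L \<nu> g"
proof -
  obtain L where L: "\<forall>z\<in>torus2. complex_of_real (g z) = evalL L z" using trig_poly[OF assms(4)] unfolding trigf_def by blast
  have gm: "g \<in> borel_measurable borel"
    by (rule borel_measurable_continuous_onI, rule continuous_on_polymonial_function) (use assms(4) real_polynomial_function_eq in auto)
  have I: "complex_of_real (integral\<^sup>L \<rho> g) = lexp \<rho> L" if "PT2 \<rho>" for \<rho>
  proof -
    have "complex_of_real (integral\<^sup>L \<rho> g) = (\<integral>z. complex_of_real (g z) \<partial>\<rho>)" by simp
    also have "\<dots> = (\<integral>z. evalL L z \<partial>\<rho>)"
    proof (rule integral_cong_AE)
      have gm': "(\<lambda>z. complex_of_real (g z)) \<in> borel_measurable borel" using gm by measurable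
      show "(\<lambda>z. complex_of_real (g z)) \<in> borel_measurable \<rho>" by (rule PT2_meas[OF that gm'])
      show "evalL L \<in> borel_measurable \<rho>" by (rule PT2_meas[OF that evalL_meas])
      show "AE z in \<rho>. complex_of_real (g z) = evalL L z" using PT2_AE[OF that] L by (auto elim: eventually_mono)
    qed
    also have "\<dots> = lexp \<rho> L" by (rule int_evalL[OF that])
    finally show ?thesis .
  qed
  have "lexp \<mu> L = lexp \<nu> L" unfolding lexp_def using assms(3) by simp
  then show ?thesis using I[OF assms(1)] I[OF assms(2)] by (metis of_real_eq_iff)
qed

lemma cont_int_eq:
  fixes f :: "complex \<times> complex \<Rightarrow> real"
  assumes "PT2 \<mu>" "PT2 \<nu>" "\<And>a b. tmom \<mu> a b = tmom \<nu> a b" "continuous_on UNIV f"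
  shows "integral\<^sup>L \<mu> f = integral\<^sup>L \<nu> f"
proof -
  have H: "\<bar>integral\<^sup>L \<mu> f - integral\<^sup>L \<nu> f\<bar> \<le> 2 * e" if e: "e > 0" for e
  proof -
    obtain g where g: "real_polynomial_function g" "\<And>x. x \<in> torus2 \<Longrightarrow> \<bar>f x - g x\<bar> < e"
      using Stone_Weierstrass_real_polynomial_function[OF compact_torus2_aux continuous_on_subset[OF assms(4)] e]
      by blast
    have gc: "continuous_on UNIV g"
      by (rule continuous_on_polymonial_function) (use g(1) real_polynomial_function_eq in auto)
    have d: "\<bar>integral\<^sup>L \<rho> f - integral\<^sup>L \<rho> g\<bar> \<le> e" if "PT2 \<rho>" for \<rho>
    proof -
      have "\<bar>integral\<^sup>L \<rho> (\<lambda>z. f z - g z)\<bar> \<le> e"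
        by (rule int_close[OF that])
           (use integrable_cont[OF that assms(4)] integrable_cont[OF that gc] PT2_AE[OF that] g(2) in
              \<open>auto elim!: eventually_mono intro: less_imp_le\<close>)
      then show ?thesis using integrable_cont[OF that assms(4)] integrable_cont[OF that gc] by simp
    qed
    have "integral\<^sup>L \<mu> g = integral\<^sup>L \<nu> g" by (rule int_poly_eq[OF assms(1-3) g(1)])
    then show ?thesis using d[OF assms(1)] d[OF assms(2)] by linarith
  qed
  have "\<bar>integral\<^sup>L \<mu> f - integral\<^sup>L \<nu> f\<bar> \<le> 0"
  proof (rule field_le_epsilon)
    fix e :: real assume "0 < e"
    then have "\<bar>integral\<^sup>L \<mu> f - integral\<^sup>L \<nu> f\<bar> \<le> 2 * (e / 2)" by (intro H) simp
    then show "\<bar>integral\<^sup>L \<mu> f - integral\<^sup>L \<nu> f\<bar> \<le> 0 + e" by simp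
  qed
  then show ?thesis by simp
qed

lemma closed_measure_eq:
  assumes "PT2 \<mu>" "PT2 \<nu>" "\<And>a b. tmom \<mu> a b = tmom \<nu> a b" "closed C"
  shows "measure \<mu> C = measure \<nu> C"
proof (cases "C = {}")
  case True then show ?thesis by simp
next
  case False
  define f where "f = (\<lambda>(n::nat) x. max 0 (1 - real n * infdist x C))"
  have fc: "continuous_on UNIV (f n)" for n unfolding f_def by (intro continuous_intros)
  have lim: "(\<lambda>n. f n x) \<longlonglongrightarrow> indicator C x" for x
  proof (cases "x \<in> C")
    case True
    then have "infdist x C = 0" using in_closed_iff_infdist_zero[OF assms(4) False] by simp
    then show ?thesis using True by (simp add: f_def)
  next
    case nC: False
    then have d: "infdist x C > 0" using in_closed_iff_infdist_zero[OF assms(4) False] infdist_nonneg[of x C] by simp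
    obtain N where N: "1 / infdist x C < real N" using reals_Archimedean2 by blast
    have "eventually (\<lambda>n. f n x = 0) sequentially"
      unfolding eventually_sequentially
    proof (intro exI allI impI)
      fix n assume "N \<le> n"
      then have "1 < real n * infdist x C" using N d by (simp add: field_simps) (smt (verit) of_nat_mono mult_right_mono)
      then show "f n x = 0" by (simp add: f_def)
    qed
    then have "(\<lambda>n. f n x) \<longlonglongrightarrow> 0" by (rule tendsto_eventually)
    then show ?thesis using nC by simp
  qed
  have L: "(\<lambda>n. integral\<^sup>L \<rho> (f n)) \<longlonglongrightarrow> measure \<rho> C" if "PT2 \<rho>" for \<rho>
  proof -
    interpret prob_space \<rho> by (rule PT2_prob[OF that])
    have Cs: "C \<in> sets \<rho>" using PT2_sets[OF that] assms(4) by simp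
    have "(\<lambda>n. integral\<^sup>L \<rho> (f n)) \<longlonglongrightarrow> integral\<^sup>L \<rho> (indicator C)"
    proof (rule integral_dominated_convergence[where w = "\<lambda>_. 1"])
      show "indicator C \<in> borel_measurable \<rho>" using Cs by simp
      show "f n \<in> borel_measurable \<rho>" for n by (rule PT2_meas[OF that borel_measurable_continuous_onI[OF fc]])
      show "integrable \<rho> (\<lambda>_. 1::real)" by simp
      show "AE x in \<rho>. (\<lambda>n. f n x) \<longlonglongrightarrow> indicator C x" using lim by simp
      show "AE x in \<rho>. norm (f n x) \<le> 1" for n by (simp add: f_def infdist_nonneg)
    qed
    then show ?thesis using Cs by simp
  qed
  have "integral\<^sup>L \<mu> (f n) = integral\<^sup>L \<nu> (f n)" for n by (rule cont_int_eq[OF assms(1-3) fc])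
  then show ?thesis using LIMSEQ_unique[OF L[OF assms(1)]] L[OF assms(2)] by simp
qed

lemma mom_determine:
  assumes "PT2 \<mu>" "PT2 \<nu>" "\<And>a b. tmom \<mu> a b = tmom \<nu> a b"
  shows "\<mu> = \<nu>"
proof -
  interpret M: prob_space \<mu> by (rule PT2_prob[OF assms(1)])
  interpret N: prob_space \<nu> by (rule PT2_prob[OF assms(2)])
  show ?thesis
  proof (rule measure_eqI_generator_eq[where E = "Collect closed :: (complex \<times> complex) set set" and \<Omega> = UNIV and A = "\<lambda>_. UNIV"])
    show "Int_stable (Collect closed :: (complex \<times> complex) set set)" by (auto simp: Int_stable_def)
    show "(Collect closed :: (complex \<times> complex) set set) \<subseteq> Pow UNIV" by simp
    have sb: "sets (borel :: (complex \<times> complex) measure) = sigma_sets UNIV (Collect closed)"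
      unfolding borel_eq_closed by (rule sets_measure_of) simp
    show "sets \<mu> = sigma_sets UNIV (Collect closed)" using PT2_sets[OF assms(1)] sb by simp
    show "sets \<nu> = sigma_sets UNIV (Collect closed)" using PT2_sets[OF assms(2)] sb by simp
    fix X :: "(complex \<times> complex) set" assume "X \<in> Collect closed"
    then have X: "closed X" by simp
    have "measure \<mu> X = measure \<nu> X" by (rule closed_measure_eq[OF assms X])
    then show "emeasure \<mu> X = emeasure \<nu> X" by (simp add: M.emeasure_eq_measure N.emeasure_eq_measure)
  next
    show "range (\<lambda>_. UNIV) \<subseteq> (Collect closed :: (complex \<times> complex) set set)" by auto
    show "(\<Union>i. UNIV) = (UNIV :: (complex \<times> complex) set)" by simp
    show "emeasure \<mu> UNIV \<noteq> \<infinity>" for i by (simp add: M.emeasure_eq_measure)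
  qed
qed

lemma tmom_hd: "tmom (haarT \<Otimes>\<^sub>M delta1) a b = (if a = 0 then 1 else 0)"
  by (simp add: tmom_pair[OF circmeas_haarT circmeas_delta1] int_haarT int_delta1)
lemma tmom_dh: "tmom (delta1 \<Otimes>\<^sub>M haarT) a b = (if b = 0 then 1 else 0)"
  by (simp add: tmom_pair[OF circmeas_delta1 circmeas_haarT] int_haarT int_delta1)
lemma tmom_hh: "tmom (haarT \<Otimes>\<^sub>M haarT) a b = (if a = 0 \<and> b = 0 then 1 else 0)"
  by (simp add: tmom_pair[OF circmeas_haarT circmeas_haarT] int_haarT)
lemma tmom_hm2: "PT2 \<nu> \<Longrightarrow> tmom (haarT \<Otimes>\<^sub>M marg2 \<nu>) a b = (if a = 0 then tmom \<nu> 0 b else 0)"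
  by (simp add: tmom_pair[OF circmeas_haarT circmeas_marg2] int_haarT int_marg2)
lemma tmom_m1h: "PT2 \<nu> \<Longrightarrow> tmom (marg1 \<nu> \<Otimes>\<^sub>M haarT) a b = (if b = 0 then tmom \<nu> a 0 else 0)"
  by (simp add: tmom_pair[OF circmeas_marg1 circmeas_haarT] int_haarT int_marg1)

lemma PT2_hd: "PT2 (haarT \<Otimes>\<^sub>M delta1)" by (rule PT2_pair[OF circmeas_haarT circmeas_delta1])
lemma PT2_dh: "PT2 (delta1 \<Otimes>\<^sub>M haarT)" by (rule PT2_pair[OF circmeas_delta1 circmeas_haarT])
lemma PT2_hh: "PT2 (haarT \<Otimes>\<^sub>M haarT)" by (rule PT2_pair[OF circmeas_haarT circmeas_haarT])
lemma PT2_hm2: "PT2 \<nu> \<Longrightarrow> PT2 (haarT \<Otimes>\<^sub>M marg2 \<nu>)" by (rule PT2_pair[OF circmeas_haarT circmeas_marg2])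
lemma PT2_m1h: "PT2 \<nu> \<Longrightarrow> PT2 (marg1 \<nu> \<Otimes>\<^sub>M haarT)" by (rule PT2_pair[OF circmeas_marg1 circmeas_haarT])

abbreviation NN :: "m2 \<Rightarrow> m2 \<Rightarrow> bool \<Rightarrow> m2" where "NN \<mu> \<mu>' \<equiv> (\<lambda>i. if i then \<mu> else \<mu>')"

lemma fockHD: "(\<And>a b. tmom \<mu> a b = (if a = 0 then 1 else 0)) \<Longrightarrow> PT2 \<mu>' \<Longrightarrow>
   fock_moment (NN \<mu> \<mu>') p q = (if p = 0 then tmom \<mu>' 0 q else 0)"
  using fock_hd[of "NN \<mu> \<mu>'"] tmom_00 by simp
lemma fockDH: "(\<And>a b. tmom \<mu> a b = (if b = 0 then 1 else 0)) \<Longrightarrow> PT2 \<mu>' \<Longrightarrow>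
   fock_moment (NN \<mu> \<mu>') p q = (if q = 0 then tmom \<mu>' p 0 else 0)"
  using fock_dh[of "NN \<mu> \<mu>'"] tmom_00 by simp
lemma fockHH: "(\<And>a b. tmom \<mu> a b = (if a = 0 \<and> b = 0 then 1 else 0)) \<Longrightarrow>
   fock_moment (NN \<mu> \<mu>') p q = (if p = 0 \<and> q = 0 then 1 else 0)"
  using fock_hh[of "NN \<mu> \<mu>'"] by simp
lemma fockP: "(\<And>a b. tmom \<mu> a b = (if a = b then 1 else 0)) \<Longrightarrow>
   fock_moment (NN \<mu> \<mu>') p q = (if p = q then (if 0 \<le> p then tmom \<mu>' 1 1 ^ nat p else tmom \<mu>' (-1) (-1) ^ nat (-p)) else 0)"
  using fock_P[of "NN \<mu> \<mu>'"] by simp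

lemma item1: assumes "PT2 \<nu>" shows "bb_factor (haarT \<Otimes>\<^sub>M delta1) \<nu> \<longleftrightarrow> \<nu> = haarT \<Otimes>\<^sub>M marg2 \<nu>"
proof
  assume "bb_factor (haarT \<Otimes>\<^sub>M delta1) \<nu>"
  then obtain \<mu>' where \<mu>': "PT2 \<mu>'" and m: "\<And>p q. tmom \<nu> p q = fock_moment (NN (haarT \<Otimes>\<^sub>M delta1) \<mu>') p q"
    unfolding bb_factor_def bbconv_def by blast
  have m': "tmom \<nu> p q = (if p = 0 then tmom \<mu>' 0 q else 0)" for p q
    using m[of p q] fockHD[OF tmom_hd \<mu>'] by simp
  show "\<nu> = haarT \<Otimes>\<^sub>M marg2 \<nu>"
    by (rule mom_determine[OF assms PT2_hm2[OF assms]]) (simp add: tmom_hm2[OF assms] m')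
next
  assume eq: "\<nu> = haarT \<Otimes>\<^sub>M marg2 \<nu>"
  have "tmom \<nu> p q = (if p = 0 then tmom \<nu> 0 q else 0)" for p q
    using arg_cong[where f = "\<lambda>m. tmom m p q", OF eq] tmom_hm2[OF assms] by simp
  then show "bb_factor (haarT \<Otimes>\<^sub>M delta1) \<nu>"
    unfolding bb_factor_def bbconv_def using assms fockHD[OF tmom_hd assms] by metis
qed

lemma item2: assumes "PT2 \<nu>" shows "bb_factor (delta1 \<Otimes>\<^sub>M haarT) \<nu> \<longleftrightarrow> \<nu> = marg1 \<nu> \<Otimes>\<^sub>M haarT"
proof
  assume "bb_factor (delta1 \<Otimes>\<^sub>M haarT) \<nu>"
  then obtain \<mu>' where \<mu>': "PT2 \<mu>'" and m: "\<And>p q. tmom \<nu> p q = fock_moment (NN (delta1 \<Otimes>\<^sub>M haarT) \<mu>') p q"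
    unfolding bb_factor_def bbconv_def by blast
  have m': "tmom \<nu> p q = (if q = 0 then tmom \<mu>' p 0 else 0)" for p q
    using m[of p q] fockDH[OF tmom_dh \<mu>'] by simp
  show "\<nu> = marg1 \<nu> \<Otimes>\<^sub>M haarT"
    by (rule mom_determine[OF assms PT2_m1h[OF assms]]) (simp add: tmom_m1h[OF assms] m')
next
  assume eq: "\<nu> = marg1 \<nu> \<Otimes>\<^sub>M haarT"
  have "tmom \<nu> p q = (if q = 0 then tmom \<nu> p 0 else 0)" for p q
    using arg_cong[where f = "\<lambda>m. tmom m p q", OF eq] tmom_m1h[OF assms] by simp
  then show "bb_factor (delta1 \<Otimes>\<^sub>M haarT) \<nu>"
    unfolding bb_factor_def bbconv_def using assms fockDH[OF tmom_dh assms] by metis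
qed

lemma item3: assumes "PT2 \<nu>" shows "bb_factor (haarT \<Otimes>\<^sub>M haarT) \<nu> \<longleftrightarrow> \<nu> = haarT \<Otimes>\<^sub>M haarT"
proof
  assume "bb_factor (haarT \<Otimes>\<^sub>M haarT) \<nu>"
  then obtain \<mu>' where \<mu>': "PT2 \<mu>'" and m: "\<And>p q. tmom \<nu> p q = fock_moment (NN (haarT \<Otimes>\<^sub>M haarT) \<mu>') p q"
    unfolding bb_factor_def bbconv_def by blast
  show "\<nu> = haarT \<Otimes>\<^sub>M haarT"
    by (rule mom_determine[OF assms PT2_hh]) (simp add: tmom_hh m fockHH[OF tmom_hh])
next
  assume eq: "\<nu> = haarT \<Otimes>\<^sub>M haarT"
  have "tmom \<nu> p q = (if p = 0 \<and> q = 0 then 1 else 0)" for p q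
    using eq tmom_hh by simp
  then show "bb_factor (haarT \<Otimes>\<^sub>M haarT) \<nu>"
    unfolding bb_factor_def bbconv_def using assms fockHH[OF tmom_hh] by metis
qed


lemma powi_nat: "0 \<le> p \<Longrightarrow> (x::complex) powi p = x ^ nat p"
  by (simp add: power_int_def)

lemma item4: assumes "PT2 \<nu>"
  shows "bb_factor Pmeas \<nu> \<longleftrightarrow>
         (\<forall>(p::int) (q::nat). tmom \<nu> p (int q) = (if p = int q then tmom \<nu> 1 1 powi p else 0))"
proof
  assume "bb_factor Pmeas \<nu>"
  then obtain \<mu>' where \<mu>': "PT2 \<mu>'" and m: "\<And>p q. tmom \<nu> p q = fock_moment (NN Pmeas \<mu>') p q"
    unfolding bb_factor_def bbconv_def by blast
  have m': "tmom \<nu> p q = (if p = q then (if 0 \<le> p then tmom \<mu>' 1 1 ^ nat p else tmom \<mu>' (-1) (-1) ^ nat (-p)) else 0)" for p q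
    using m[of p q] fockP[OF tmom_Pmeas] by simp
  have m11: "tmom \<nu> 1 1 = tmom \<mu>' 1 1" using m'[of 1 1] by simp
  show "\<forall>(p::int) (q::nat). tmom \<nu> p (int q) = (if p = int q then tmom \<nu> 1 1 powi p else 0)"
    using m' m11 by (auto simp: powi_nat)
next
  assume H: "\<forall>(p::int) (q::nat). tmom \<nu> p (int q) = (if p = int q then tmom \<nu> 1 1 powi p else 0)"
  have "tmom \<nu> p q = (if p = q then (if 0 \<le> p then tmom \<nu> 1 1 ^ nat p else tmom \<nu> (-1) (-1) ^ nat (-p)) else 0)" for p q
  proof (cases "0 \<le> q")
    case True
    then show ?thesis using H[rule_format, of p "nat q"] by (auto simp: powi_nat)
  next
    case False
    have c: "tmom \<nu> p q = cnj (tmom \<nu> (-p) (-q))" using tmom_cnj[OF assms, of "-p" "-q"] by simp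
    have h: "tmom \<nu> (-p) (-q) = (if -p = -q then tmom \<nu> 1 1 powi (-p) else 0)"
      using H[rule_format, of "-p" "nat (-q)"] False by simp
    have c11: "tmom \<nu> (-1) (-1) = cnj (tmom \<nu> 1 1)" using tmom_cnj[OF assms, of 1 1] by simp
    show ?thesis using False c h c11 by (auto simp: powi_nat)
  qed
  then show "bb_factor Pmeas \<nu>"
    unfolding bb_factor_def bbconv_def using assms fockP[OF tmom_Pmeas] by metis
qed

lemma tmom_tstar_hd: "tmom (tstar (haarT \<Otimes>\<^sub>M delta1)) a b = (if a = 0 then 1 else 0)"
  by (simp add: tmom_tstar[OF PT2_sets[OF PT2_hd]] tmom_hd)
lemma tmom_tstar_dh: "tmom (tstar (delta1 \<Otimes>\<^sub>M haarT)) a b = (if b = 0 then 1 else 0)"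
  by (simp add: tmom_tstar[OF PT2_sets[OF PT2_dh]] tmom_dh)
lemma tmom_tstar_hh: "tmom (tstar (haarT \<Otimes>\<^sub>M haarT)) a b = (if a = 0 \<and> b = 0 then 1 else 0)"
  by (simp add: tmom_tstar[OF PT2_sets[OF PT2_hh]] tmom_hh)
lemma tmom_tstar_P: "tmom (tstar (tstar Pmeas)) a b = (if a = b then 1 else 0)"
  by (simp add: tmom_tstar tmom_Pmeas)

lemma tmom_tstarP: "PT2 \<mu> \<Longrightarrow> tmom (tstar \<mu>) a b = tmom \<mu> a (-b)"
  by (rule tmom_tstar[OF PT2_sets])

lemma bbop_unfold: "bbop_factor \<mu> \<nu> \<longleftrightarrow> (\<exists>\<mu>' \<sigma>. PT2 \<mu>' \<and> PT2 \<nu> \<and> PT2 \<sigma> \<and>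
    (\<forall>p q. tmom \<sigma> p q = fock_moment (NN (tstar \<mu>) (tstar \<mu>')) p q) \<and> \<nu> = tstar \<sigma>)"
  unfolding bbop_factor_def bbconv_op_def bbconv_def by auto

lemma item5: assumes "PT2 \<nu>" shows "bbop_factor (haarT \<Otimes>\<^sub>M delta1) \<nu> \<longleftrightarrow> \<nu> = haarT \<Otimes>\<^sub>M marg2 \<nu>"
proof
  assume "bbop_factor (haarT \<Otimes>\<^sub>M delta1) \<nu>"
  then obtain \<mu>' \<sigma> where \<mu>': "PT2 \<mu>'" and \<sigma>: "PT2 \<sigma>" and m: "\<And>p q. tmom \<sigma> p q = fock_moment (NN (tstar (haarT \<Otimes>\<^sub>M delta1)) (tstar \<mu>')) p q"
    and eq: "\<nu> = tstar \<sigma>"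
    unfolding bbop_unfold by blast
  have m': "tmom \<nu> p q = (if p = 0 then tmom (tstar \<mu>') 0 (-q) else 0)" for p q
    using m[of p "-q"] fockHD[OF tmom_tstar_hd PT2_tstar[OF \<mu>']] tmom_tstarP[OF \<sigma>] eq by simp
  show "\<nu> = haarT \<Otimes>\<^sub>M marg2 \<nu>"
    by (rule mom_determine[OF assms PT2_hm2[OF assms]]) (simp add: tmom_hm2[OF assms] m')
next
  assume eq: "\<nu> = haarT \<Otimes>\<^sub>M marg2 \<nu>"
  have t: "tmom \<nu> p q = (if p = 0 then tmom \<nu> 0 q else 0)" for p q
    using arg_cong[where f = "\<lambda>m. tmom m p q", OF eq] tmom_hm2[OF assms] by simp
  have "tmom (tstar \<nu>) p q = fock_moment (NN (tstar (haarT \<Otimes>\<^sub>M delta1)) (tstar \<nu>)) p q" for p q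
    using fockHD[OF tmom_tstar_hd PT2_tstar[OF assms]] tmom_tstarP[OF assms] t[of p "-q"] by simp
  then show "bbop_factor (haarT \<Otimes>\<^sub>M delta1) \<nu>"
    unfolding bbop_unfold
    by (intro exI[of _ \<nu>] exI[of _ "tstar \<nu>"] conjI allI)
       (simp_all add: assms PT2_tstar[OF assms] tstar_tstar[OF PT2_sets[OF assms]])
qed

lemma item6: assumes "PT2 \<nu>" shows "bbop_factor (delta1 \<Otimes>\<^sub>M haarT) \<nu> \<longleftrightarrow> \<nu> = marg1 \<nu> \<Otimes>\<^sub>M haarT"
proof
  assume "bbop_factor (delta1 \<Otimes>\<^sub>M haarT) \<nu>"
  then obtain \<mu>' \<sigma> where \<mu>': "PT2 \<mu>'" and \<sigma>: "PT2 \<sigma>" and m: "\<And>p q. tmom \<sigma> p q = fock_moment (NN (tstar (delta1 \<Otimes>\<^sub>M haarT)) (tstar \<mu>')) p q"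
    and eq: "\<nu> = tstar \<sigma>"
    unfolding bbop_unfold by blast
  have m': "tmom \<nu> p q = (if q = 0 then tmom (tstar \<mu>') p 0 else 0)" for p q
    using m[of p "-q"] fockDH[OF tmom_tstar_dh PT2_tstar[OF \<mu>']] tmom_tstarP[OF \<sigma>] eq by simp
  show "\<nu> = marg1 \<nu> \<Otimes>\<^sub>M haarT"
    by (rule mom_determine[OF assms PT2_m1h[OF assms]]) (simp add: tmom_m1h[OF assms] m')
next
  assume eq: "\<nu> = marg1 \<nu> \<Otimes>\<^sub>M haarT"
  have t: "tmom \<nu> p q = (if q = 0 then tmom \<nu> p 0 else 0)" for p q
    using arg_cong[where f = "\<lambda>m. tmom m p q", OF eq] tmom_m1h[OF assms] by simp
  have "tmom (tstar \<nu>) p q = fock_moment (NN (tstar (delta1 \<Otimes>\<^sub>M haarT)) (tstar \<nu>)) p q" for p q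
    using fockDH[OF tmom_tstar_dh PT2_tstar[OF assms]] tmom_tstarP[OF assms] t[of p "-q"] by simp
  then show "bbop_factor (delta1 \<Otimes>\<^sub>M haarT) \<nu>"
    unfolding bbop_unfold
    by (intro exI[of _ \<nu>] exI[of _ "tstar \<nu>"] conjI allI)
       (simp_all add: assms PT2_tstar[OF assms] tstar_tstar[OF PT2_sets[OF assms]])
qed

lemma item7: assumes "PT2 \<nu>" shows "bbop_factor (haarT \<Otimes>\<^sub>M haarT) \<nu> \<longleftrightarrow> \<nu> = haarT \<Otimes>\<^sub>M haarT"
proof
  assume "bbop_factor (haarT \<Otimes>\<^sub>M haarT) \<nu>"
  then obtain \<mu>' \<sigma> where \<mu>': "PT2 \<mu>'" and \<sigma>: "PT2 \<sigma>" and m: "\<And>p q. tmom \<sigma> p q = fock_moment (NN (tstar (haarT \<Otimes>\<^sub>M haarT)) (tstar \<mu>')) p q"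
    and eq: "\<nu> = tstar \<sigma>"
    unfolding bbop_unfold by blast
  have m': "tmom \<nu> p q = (if p = 0 \<and> q = 0 then 1 else 0)" for p q
    using m[of p "-q"] fockHH[OF tmom_tstar_hh] tmom_tstarP[OF \<sigma>] eq by simp
  show "\<nu> = haarT \<Otimes>\<^sub>M haarT"
    by (rule mom_determine[OF assms PT2_hh]) (simp add: tmom_hh m')
next
  assume eq: "\<nu> = haarT \<Otimes>\<^sub>M haarT"
  have t: "tmom \<nu> p q = (if p = 0 \<and> q = 0 then 1 else 0)" for p q
    using eq tmom_hh by simp
  have "tmom (tstar \<nu>) p q = fock_moment (NN (tstar (haarT \<Otimes>\<^sub>M haarT)) (tstar \<nu>)) p q" for p q
    using fockHH[OF tmom_tstar_hh] tmom_tstarP[OF assms] t by simp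
  then show "bbop_factor (haarT \<Otimes>\<^sub>M haarT) \<nu>"
    unfolding bbop_unfold
    by (intro exI[of _ \<nu>] exI[of _ "tstar \<nu>"] conjI allI)
       (simp_all add: assms PT2_tstar[OF assms] tstar_tstar[OF PT2_sets[OF assms]])
qed

lemma item8: assumes "PT2 \<nu>"
  shows "bbop_factor (tstar Pmeas) \<nu> \<longleftrightarrow>
         (\<forall>(p::int) (n::nat). tmom \<nu> p (- int n) = (if p = int n then tmom \<nu> 1 (-1) powi p else 0))"
proof
  assume "bbop_factor (tstar Pmeas) \<nu>"
  then obtain \<mu>' \<sigma> where \<mu>': "PT2 \<mu>'" and \<sigma>: "PT2 \<sigma>" and m: "\<And>p q. tmom \<sigma> p q = fock_moment (NN (tstar (tstar Pmeas)) (tstar \<mu>')) p q"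
    and eq: "\<nu> = tstar \<sigma>"
    unfolding bbop_unfold by blast
  have m': "tmom \<nu> p q = (if p = -q then (if 0 \<le> p then tmom (tstar \<mu>') 1 1 ^ nat p else tmom (tstar \<mu>') (-1) (-1) ^ nat (-p)) else 0)" for p q
    using m[of p "-q"] fockP[OF tmom_tstar_P] tmom_tstarP[OF \<sigma>] eq by simp
  have m11: "tmom \<nu> 1 (-1) = tmom (tstar \<mu>') 1 1" using m'[of 1 "-1"] by simp
  show "\<forall>(p::int) (n::nat). tmom \<nu> p (- int n) = (if p = int n then tmom \<nu> 1 (-1) powi p else 0)"
    using m' m11 by (auto simp: powi_nat)
next
  assume H: "\<forall>(p::int) (n::nat). tmom \<nu> p (- int n) = (if p = int n then tmom \<nu> 1 (-1) powi p else 0)"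
  have M: "tmom (tstar \<nu>) p q = (if p = q then (if 0 \<le> p then tmom (tstar \<nu>) 1 1 ^ nat p else tmom (tstar \<nu>) (-1) (-1) ^ nat (-p)) else 0)" for p q
  proof -
    have t: "tmom (tstar \<nu>) a b = tmom \<nu> a (-b)" for a b by (rule tmom_tstarP[OF assms])
    show ?thesis
    proof (cases "0 \<le> q")
      case True
      then show ?thesis using H[rule_format, of p "nat q"] by (auto simp: powi_nat t)
    next
      case False
      have c: "tmom \<nu> p (-q) = cnj (tmom \<nu> (-p) q)" using tmom_cnj[OF assms, of "-p" q] by simp
      have h: "tmom \<nu> (-p) q = (if -p = -q then tmom \<nu> 1 (-1) powi (-p) else 0)"
        using H[rule_format, of "-p" "nat (-q)"] False by simp
      have c11: "tmom \<nu> (-1) 1 = cnj (tmom \<nu> 1 (-1))" using tmom_cnj[OF assms, of 1 "-1"] by simp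
      show ?thesis using False c h c11 by (auto simp: powi_nat t)
    qed
  qed
  have "tmom (tstar \<nu>) p q = fock_moment (NN (tstar (tstar Pmeas)) (tstar \<nu>)) p q" for p q
    using fockP[OF tmom_tstar_P] M by simp
  then show "bbop_factor (tstar Pmeas) \<nu>"
    unfolding bbop_unfold
    by (intro exI[of _ \<nu>] exI[of _ "tstar \<nu>"] conjI allI)
       (simp_all add: assms PT2_tstar[OF assms] tstar_tstar[OF PT2_sets[OF assms]])
qed

theorem proposition3p3:
  fixes \<nu> :: "(complex \<times> complex) measure"
  assumes "PT2 \<nu>"
  shows "(bb_factor (haarT \<Otimes>\<^sub>M delta1) \<nu> \<longleftrightarrow> \<nu> = haarT \<Otimes>\<^sub>M marg2 \<nu>)
    \<and> (bb_factor (delta1 \<Otimes>\<^sub>M haarT) \<nu> \<longleftrightarrow> \<nu> = marg1 \<nu> \<Otimes>\<^sub>M haarT)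
    \<and> (bb_factor (haarT \<Otimes>\<^sub>M haarT) \<nu> \<longleftrightarrow> \<nu> = haarT \<Otimes>\<^sub>M haarT)
    \<and> (bb_factor Pmeas \<nu> \<longleftrightarrow>
         (\<forall>(p::int) (q::nat). tmom \<nu> p (int q) = (if p = int q then tmom \<nu> 1 1 powi p else 0)))
    \<and> (bbop_factor (haarT \<Otimes>\<^sub>M delta1) \<nu> \<longleftrightarrow> \<nu> = haarT \<Otimes>\<^sub>M marg2 \<nu>)
    \<and> (bbop_factor (delta1 \<Otimes>\<^sub>M haarT) \<nu> \<longleftrightarrow> \<nu> = marg1 \<nu> \<Otimes>\<^sub>M haarT)
    \<and> (bbop_factor (haarT \<Otimes>\<^sub>M haarT) \<nu> \<longleftrightarrow> \<nu> = haarT \<Otimes>\<^sub>M haarT)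
    \<and> (bbop_factor (tstar Pmeas) \<nu> \<longleftrightarrow>
         (\<forall>(p::int) (n::nat). tmom \<nu> p (- int n) =
            (if p = int n then tmom \<nu> 1 (-1) powi p else 0)))"
  using item1[OF assms] item2[OF assms] item3[OF assms] item4[OF assms]
    item5[OF assms] item6[OF assms] item7[OF assms] item8[OF assms] by blast

end
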